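(* There is a universal constant $K>0$ such that the following holds. Let $\rho_1,\dots,\rho_T$ be $d$-dimensional quantum states, $\varrho=\rho_1\otimes\cdots\otimes\rho_T$, $\rho_{\mathrm{avg}}=\frac1T\sum_t\rho_t$, and $\mu=\mathrm{Tr}[(\rho_{\mathrm{avg}}-\frac Id)^2]$. Let $A=\frac1{T^2}\sum_{1\le i\ne j\le T}S_{ij}-\frac Id$, where $S_{ij}$ is the swap operator on the $i$th and $j$th tensor components of $(\mathbb C^d)^{\otimes T}$ and $\frac Id$ denotes $\frac1d$ times the identity on $(\mathbb C^d)^{\otimes T}$. Then $$\big|\mathbb E_\varrho[A]-\mu\big|\le\frac1T,\qquad \mathrm{Var}_\varrho[A]\le K\Big(\frac\mu T+\frac1{T^2}\Big).$$
   Context: $\mathbb E_\varrho[Y]=\mathrm{Tr}[\varrho Y]$ and $\mathrm{Var}_\varrho[Y]=\mathbb E_\varrho[Y^2]-\mathbb E_\varrho[Y]^2$. *)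

theory Defs
  imports Complex_Main
begin

text \<open>Operators on C^n are represented as matrices (functions nat => nat => complex)
  with respect to the standard basis, indices ranging over 0..<n.
  Operators on the T-fold tensor power (C^d)^{\<otimes>T} are represented as matrices
  indexed by computational basis states, i.e. lists xs of length T with entries < d.\<close>

definition density :: "nat \<Rightarrow> (nat \<Rightarrow> nat \<Rightarrow> complex) \<Rightarrow> bool" where
  "density d \<rho> \<longleftrightarrow>
     (\<forall>v :: nat \<Rightarrow> complex.
        (\<Sum>i<d. \<Sum>j<d. cnj (v i) * \<rho> i j * v j) \<in> \<real> \<and>
        0 \<le> Re (\<Sum>i<d. \<Sum>j<d. cnj (v i) * \<rho> i j * v j)) \<and>
     (\<Sum>i<d. \<rho> i i) = 1"

definition basis :: "nat \<Rightarrow> nat \<Rightarrow> nat list set" where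
  "basis d T = {xs. length xs = T \<and> set xs \<subseteq> {..<d}}"

definition prod_state :: "nat \<Rightarrow> (nat \<Rightarrow> nat \<Rightarrow> nat \<Rightarrow> complex) \<Rightarrow> nat list \<Rightarrow> nat list \<Rightarrow> complex" where
  "prod_state T \<rho> xs ys = (\<Prod>t<T. \<rho> t (xs ! t) (ys ! t))"

definition swap_op :: "nat \<Rightarrow> nat \<Rightarrow> nat list \<Rightarrow> nat list \<Rightarrow> complex" where
  "swap_op i j xs ys = (if xs = ys[i := ys ! j, j := ys ! i] then 1 else 0)"

definition id_op :: "nat list \<Rightarrow> nat list \<Rightarrow> complex" where
  "id_op xs ys = (if xs = ys then 1 else 0)"

definition mat_mult :: "'i set \<Rightarrow> ('i \<Rightarrow> 'i \<Rightarrow> complex) \<Rightarrow> ('i \<Rightarrow> 'i \<Rightarrow> complex) \<Rightarrow> 'i \<Rightarrow> 'i \<Rightarrow> complex" where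
  "mat_mult I X Y a b = (\<Sum>c\<in>I. X a c * Y c b)"

definition mat_trace :: "'i set \<Rightarrow> ('i \<Rightarrow> 'i \<Rightarrow> complex) \<Rightarrow> complex" where
  "mat_trace I X = (\<Sum>a\<in>I. X a a)"

definition expect :: "'i set \<Rightarrow> ('i \<Rightarrow> 'i \<Rightarrow> complex) \<Rightarrow> ('i \<Rightarrow> 'i \<Rightarrow> complex) \<Rightarrow> complex" where
  "expect I \<rho> Y = mat_trace I (mat_mult I \<rho> Y)"

definition variance :: "'i set \<Rightarrow> ('i \<Rightarrow> 'i \<Rightarrow> complex) \<Rightarrow> ('i \<Rightarrow> 'i \<Rightarrow> complex) \<Rightarrow> complex" where
  "variance I \<rho> Y = expect I \<rho> (mat_mult I Y Y) - (expect I \<rho> Y)^2"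

definition rho_avg :: "nat \<Rightarrow> (nat \<Rightarrow> nat \<Rightarrow> nat \<Rightarrow> complex) \<Rightarrow> nat \<Rightarrow> nat \<Rightarrow> complex" where
  "rho_avg T \<rho> a b = (\<Sum>t<T. \<rho> t a b) / of_nat T"

definition mu :: "nat \<Rightarrow> nat \<Rightarrow> (nat \<Rightarrow> nat \<Rightarrow> nat \<Rightarrow> complex) \<Rightarrow> complex" where
  "mu d T \<rho> = (let M = (\<lambda>a b. rho_avg T \<rho> a b - (if a = b then 1 / of_nat d else 0))
               in mat_trace {..<d} (mat_mult {..<d} M M))"

definition A_op :: "nat \<Rightarrow> nat \<Rightarrow> nat list \<Rightarrow> nat list \<Rightarrow> complex" where
  "A_op d T xs ys =
     (\<Sum>i<T. \<Sum>j\<in>{..<T} - {i}. swap_op i j xs ys) / (of_nat T)^2 - id_op xs ys / of_nat d"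

end

theory Submission
  imports Defs "HOL-Library.FuncSet"
begin


definition qf :: "nat \<Rightarrow> (nat \<Rightarrow> nat \<Rightarrow> complex) \<Rightarrow> (nat \<Rightarrow> complex) \<Rightarrow> complex" where
  "qf d \<rho> v = (\<Sum>i<d. \<Sum>j<d. cnj (v i) * \<rho> i j * v j)"

lemma qf_supp:
  assumes "S \<subseteq> {..<d}" "\<And>i. i \<notin> S \<Longrightarrow> v i = 0"
  shows "qf d \<rho> v = (\<Sum>i\<in>S. \<Sum>j\<in>S. cnj (v i) * \<rho> i j * v j)"
proof -
  have fS: "finite S" using assms(1) finite_subset by blast
  have "qf d \<rho> v = (\<Sum>i<d. \<Sum>j\<in>S. cnj (v i) * \<rho> i j * v j)"
    unfolding qf_def
    by (rule sum.cong[OF refl], rule sum.mono_neutral_right) (use assms in auto)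
  also have "\<dots> = (\<Sum>i\<in>S. \<Sum>j\<in>S. cnj (v i) * \<rho> i j * v j)"
    by (rule sum.mono_neutral_right) (use assms in auto)
  finally show ?thesis .
qed

lemma qf_two:
  assumes "a < d" "b < d" "a \<noteq> b"
  shows "qf d \<rho> (\<lambda>i. if i = a then x else if i = b then y else 0) =
    cnj x * \<rho> a a * x + cnj x * \<rho> a b * y + cnj y * \<rho> b a * x + cnj y * \<rho> b b * y"
  using assms by (subst qf_supp[where S="{a,b}"]) auto

lemma qf_one:
  assumes "a < d"
  shows "qf d \<rho> (\<lambda>i. if i = a then x else 0) = cnj x * \<rho> a a * x"
  using assms by (subst qf_supp[where S="{a}"]) auto


lemma dens_qf: "density d \<rho> \<Longrightarrow> qf d \<rho> v \<in> \<real> \<and> 0 \<le> Re (qf d \<rho> v)"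
  unfolding density_def qf_def by blast

lemma dens_tr: "density d \<rho> \<Longrightarrow> (\<Sum>i<d. \<rho> i i) = 1"
  unfolding density_def by blast

lemma dens_diag:
  assumes "density d \<rho>" "a < d"
  shows "Im (\<rho> a a) = 0" "Re (\<rho> a a) \<ge> 0"
proof -
  have "qf d \<rho> (\<lambda>i. if i = a then 1 else 0) = \<rho> a a" using qf_one[OF assms(2)] by simp
  with dens_qf[OF assms(1)] show "Im (\<rho> a a) = 0" "Re (\<rho> a a) \<ge> 0"
    by (metis Reals_cases Im_complex_of_real)+
qed

lemma dens_diag_real:
  assumes "density d \<rho>" "a < d"
  shows "\<rho> a a = of_real (Re (\<rho> a a))"
  using dens_diag[OF assms] by (simp add: complex_eq_iff)

lemma dens_herm:
  assumes "density d \<rho>" "a < d" "b < d"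
  shows "\<rho> b a = cnj (\<rho> a b)"
proof (cases "a = b")
  case True
  then show ?thesis using dens_diag[OF assms(1,2)] by (simp add: complex_eq_iff)
next
  case False
  have r1: "Im (\<rho> a a) = 0" "Im (\<rho> b b) = 0" using dens_diag assms by auto
  have "qf d \<rho> (\<lambda>i. if i = a then 1 else if i = b then 1 else 0) \<in> \<real>"
    using dens_qf[OF assms(1)] by blast
  then have h1: "Im (\<rho> a a + \<rho> a b + \<rho> b a + \<rho> b b) = 0"
    using qf_two[OF assms(2,3) False, of \<rho> 1 1] by (simp add: complex_is_Real_iff)
  have "qf d \<rho> (\<lambda>i. if i = a then 1 else if i = b then \<i> else 0) \<in> \<real>"
    using dens_qf[OF assms(1)] by blast
  then have h2: "Im (\<rho> a a + \<rho> a b * \<i> - \<i> * \<rho> b a + \<rho> b b) = 0"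
    using qf_two[OF assms(2,3) False, of \<rho> 1 \<i>] by (simp add: complex_is_Real_iff)
  show ?thesis using h1 h2 r1 by (simp add: complex_eq_iff)
qed

lemma real_disc:
  fixes A B r :: real
  assumes "A \<ge> 0" "B \<ge> 0" "r \<ge> 0" "\<And>t. 0 \<le> A * t^2 - 2 * t * r + B * r"
  shows "r \<le> A * B"
proof (cases "A > 0")
  case True
  have "0 \<le> A * (r/A)^2 - 2 * (r/A) * r + B * r" using assms(4) .
  also have "\<dots> = (A * B * r - r^2) / A" using True by (simp add: field_simps power2_eq_square)
  finally have "r^2 \<le> A * B * r" using True by (simp add: zero_le_divide_iff)
  then have "r * r \<le> (A * B) * r" by (simp add: power2_eq_square)
  then show ?thesis using assms(1-3)
    by (cases "r = 0") (auto intro: mult_right_le_imp_le)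
next
  case False
  then have "A = 0" using assms(1) by simp
  have "0 \<le> A * (B+1)^2 - 2 * (B+1) * r + B * r" using assms(4) .
  then have "0 \<le> - (B + 2) * r" using \<open>A = 0\<close> by (simp add: algebra_simps)
  then have "(B + 2) * r \<le> 0" by (simp add: algebra_simps)
  then have "r \<le> 0" using assms(2) by (simp add: mult_le_0_iff)
  then show ?thesis using assms by simp
qed

lemma dens_entry_sq:
  assumes "density d \<rho>" "a < d" "b < d"
  shows "(cmod (\<rho> a b))^2 \<le> Re (\<rho> a a) * Re (\<rho> b b)"
proof (cases "a = b")
  case True
  then show ?thesis using dens_diag[OF assms(1,2)] by (simp add: cmod_def power2_eq_square)
next
  case False
  define z where "z = \<rho> a b"
  define A where "A = Re (\<rho> a a)"
  define B where "B = Re (\<rho> b b)"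
  have rA: "\<rho> a a = of_real A" unfolding A_def using dens_diag_real assms by auto
  have rB: "\<rho> b b = of_real B" unfolding B_def using dens_diag_real assms by auto
  have hba: "\<rho> b a = cnj z" unfolding z_def using dens_herm assms by auto
  have "0 \<le> A * t^2 - 2 * t * (cmod z)^2 + B * (cmod z)^2" for t
  proof -
    have "0 \<le> Re (qf d \<rho> (\<lambda>i. if i = a then of_real t else if i = b then - cnj z else 0))"
      using dens_qf[OF assms(1)] by blast
    also have "\<dots> = Re (of_real t * of_real A * of_real t + of_real t * z * (- cnj z)
        + (- z) * cnj z * of_real t + (-z) * of_real B * (- cnj z))"
      using qf_two[OF assms(2,3) False] rA rB hba z_def by simp
    also have "\<dots> = A * t^2 - 2 * t * (cmod z)^2 + B * (cmod z)^2"
      by (simp add: cmod_def power2_eq_square algebra_simps)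
    finally show ?thesis .
  qed
  then have "(cmod z)^2 \<le> A * B"
    by (intro real_disc) (use dens_diag assms A_def B_def in auto)
  then show ?thesis unfolding z_def A_def B_def .
qed

definition sd :: "(nat \<Rightarrow> nat \<Rightarrow> complex) \<Rightarrow> nat \<Rightarrow> real" where
  "sd \<rho> a = sqrt (max 0 (Re (\<rho> a a)))"

lemma dens_entry:
  assumes "density d \<rho>" "a < d" "b < d"
  shows "cmod (\<rho> a b) \<le> sd \<rho> a * sd \<rho> b"
proof -
  have "cmod (\<rho> a b) = sqrt ((cmod (\<rho> a b))^2)" by simp
  also have "\<dots> \<le> sqrt (Re (\<rho> a a) * Re (\<rho> b b))"
    using dens_entry_sq[OF assms] real_sqrt_le_mono by blast
  also have "\<dots> = sd \<rho> a * sd \<rho> b" unfolding sd_def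
    using dens_diag(2)[OF assms(1,2)] dens_diag(2)[OF assms(1,3)] by (simp add: real_sqrt_mult)
  finally show ?thesis .
qed

lemma sd_nonneg: "sd \<rho> a \<ge> 0" unfolding sd_def by simp

lemma sd_sq: assumes "density d \<rho>" "a < d" shows "(sd \<rho> a)^2 = Re (\<rho> a a)"
  unfolding sd_def using dens_diag(2)[OF assms] by simp

lemma sd_sum_sq: "density d \<rho> \<Longrightarrow> (\<Sum>a<d. (sd \<rho> a)^2) = 1"
proof -
  assume h: "density d \<rho>"
  have "(\<Sum>a<d. (sd \<rho> a)^2) = (\<Sum>a<d. Re (\<rho> a a))" using sd_sq[OF h] by simp
  also have "\<dots> = Re (\<Sum>a<d. \<rho> a a)" by simp
  also have "\<dots> = 1" using dens_tr[OF h] by simp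
  finally show ?thesis .
qed

lemma sd_pair: 
  assumes "density d X" "density d Y"
  shows "(\<Sum>a<d. sd X a * sd Y a) \<le> 1"
proof -
  have "(\<Sum>a<d. sd X a * sd Y a) \<le> (\<Sum>a<d. ((sd X a)^2 + (sd Y a)^2) / 2)"
  proof (rule sum_mono)
    fix a show "sd X a * sd Y a \<le> ((sd X a)^2 + (sd Y a)^2) / 2"
      using power2_diff[of "sd X a" "sd Y a"] zero_le_power2[of "sd X a - sd Y a"] by simp
  qed
  also have "\<dots> = 1" using sd_sum_sq[OF assms(1)] sd_sum_sq[OF assms(2)]
    by (simp add: sum_divide_distrib[symmetric] sum.distrib)
  finally show ?thesis .
qed


abbreviation mmd :: "nat \<Rightarrow> (nat \<Rightarrow> nat \<Rightarrow> complex) \<Rightarrow> (nat \<Rightarrow> nat \<Rightarrow> complex) \<Rightarrow> nat \<Rightarrow> nat \<Rightarrow> complex" where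
  "mmd d \<equiv> mat_mult {..<d}"
abbreviation trd :: "nat \<Rightarrow> (nat \<Rightarrow> nat \<Rightarrow> complex) \<Rightarrow> complex" where
  "trd d \<equiv> mat_trace {..<d}"

definition tr3f :: "nat \<Rightarrow> (nat \<Rightarrow> nat \<Rightarrow> complex) \<Rightarrow> (nat \<Rightarrow> nat \<Rightarrow> complex) \<Rightarrow> (nat \<Rightarrow> nat \<Rightarrow> complex) \<Rightarrow> complex" where
  "tr3f d X Y Z = (\<Sum>a<d. \<Sum>b<d. \<Sum>c<d. X a b * Y b c * Z c a)"

lemma tr2_eq: "trd d (mmd d X Y) = (\<Sum>a<d. \<Sum>c<d. X a c * Y c a)"
  by (simp add: mat_trace_def mat_mult_def)

lemma tr3_eq: "trd d (mmd d (mmd d X Y) Z) = tr3f d X Y Z"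
  unfolding mat_trace_def mat_mult_def tr3f_def sum_distrib_right
  by (rule sum.cong[OF refl], rule sum.swap)

lemma tr2_comm: "trd d (mmd d X Y) = trd d (mmd d Y X)"
  unfolding tr2_eq by (subst sum.swap) (simp add: mult.commute)

lemma tr2_sum_l: "(\<Sum>i\<in>K. trd d (mmd d (X i) Y)) = trd d (mmd d (\<lambda>a b. \<Sum>i\<in>K. X i a b) Y)"
  unfolding tr2_eq sum_distrib_right
  by (subst sum.swap, rule sum.cong[OF refl], rule sum.swap)

lemma tr2_sum_r: "(\<Sum>i\<in>K. trd d (mmd d Y (X i))) = trd d (mmd d Y (\<lambda>a b. \<Sum>i\<in>K. X i a b))"
  unfolding tr2_eq sum_distrib_left
  by (subst sum.swap, rule sum.cong[OF refl], rule sum.swap)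

lemma tr3_sum_1: "(\<Sum>i\<in>K. tr3f d (X i) Y Z) = tr3f d (\<lambda>a b. \<Sum>i\<in>K. X i a b) Y Z"
  unfolding tr3f_def sum_distrib_right
  apply (subst sum.swap, rule sum.cong[OF refl])
  apply (subst sum.swap, rule sum.cong[OF refl])
  by (subst sum.swap, rule sum.cong[OF refl], rule sum.cong[OF refl], simp)

lemma sum3_rot: "(\<Sum>a\<in>A. \<Sum>b\<in>B. \<Sum>c\<in>C. f a b c) = (\<Sum>b\<in>B. \<Sum>c\<in>C. \<Sum>a\<in>A. f a b c)"
proof -
  have "(\<Sum>a\<in>A. \<Sum>b\<in>B. \<Sum>c\<in>C. f a b c) = (\<Sum>b\<in>B. \<Sum>a\<in>A. \<Sum>c\<in>C. f a b c)"
    by (rule sum.swap)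
  also have "\<dots> = (\<Sum>b\<in>B. \<Sum>c\<in>C. \<Sum>a\<in>A. f a b c)"
    by (rule sum.cong[OF refl], rule sum.swap)
  finally show ?thesis .
qed

lemma tr3_rot: "tr3f d X Y Z = tr3f d Y Z X"
  unfolding tr3f_def by (subst sum3_rot) (simp add: mult_ac)

lemma tr3_sum_2: "(\<Sum>i\<in>K. tr3f d Y (X i) Z) = tr3f d Y (\<lambda>a b. \<Sum>i\<in>K. X i a b) Z"
  by (simp only: tr3_rot[of d Y _ Z] tr3_sum_1)

lemma tr3_sum_3: "(\<Sum>i\<in>K. tr3f d Y Z (X i)) = tr3f d Y Z (\<lambda>a b. \<Sum>i\<in>K. X i a b)"
  by (simp only: tr3_rot[of d Y Z] tr3_sum_2)

definition herm :: "nat \<Rightarrow> (nat \<Rightarrow> nat \<Rightarrow> complex) \<Rightarrow> bool" where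
  "herm d X \<longleftrightarrow> (\<forall>a<d. \<forall>b<d. X b a = cnj (X a b))"

lemma dens_herm': "density d X \<Longrightarrow> herm d X"
  unfolding herm_def by (intro allI impI, rule dens_herm)

lemma herm_cnj: assumes "herm d X" "a < d" "c < d" shows "cnj (X a c) = X c a"
proof -
  have "X c a = cnj (X a c)" using assms unfolding herm_def by blast
  then show ?thesis by simp
qed

lemma tr2_real:
  assumes "herm d X" "herm d Y"
  shows "Im (trd d (mmd d X Y)) = 0"
proof -
  have "cnj (trd d (mmd d X Y)) = (\<Sum>a<d. \<Sum>c<d. X c a * Y a c)"
    unfolding tr2_eq cnj_sum
    by (intro sum.cong refl) (simp add: herm_cnj[OF assms(1)] herm_cnj[OF assms(2)])
  also have "\<dots> = trd d (mmd d Y X)" unfolding tr2_eq by (simp add: mult.commute)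
  also have "\<dots> = trd d (mmd d X Y)" by (rule tr2_comm)
  finally have "Im (cnj (trd d (mmd d X Y))) = Im (trd d (mmd d X Y))" by simp
  then show ?thesis by simp
qed

lemma tr2_bound:
  assumes "density d X" "density d Y"
  shows "cmod (trd d (mmd d X Y)) \<le> 1"
proof -
  have "cmod (trd d (mmd d X Y)) \<le> (\<Sum>a<d. \<Sum>c<d. cmod (X a c) * cmod (Y c a))"
    unfolding tr2_eq
    by (rule order.trans[OF norm_sum sum_mono], rule order.trans[OF norm_sum sum_mono])
       (simp add: norm_mult)
  also have "\<dots> \<le> (\<Sum>a<d. \<Sum>c<d. (sd X a * sd Y a) * (sd X c * sd Y c))"
    by (intro sum_mono) (auto intro!: order.trans[OF mult_mono[OF dens_entry[OF assms(1)] dens_entry[OF assms(2)]]]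
          simp: sd_nonneg mult_ac)
  also have "\<dots> = (\<Sum>a<d. sd X a * sd Y a) * (\<Sum>c<d. sd X c * sd Y c)"
    by (simp add: sum_product)
  also have "\<dots> \<le> 1 * 1"
    using sd_pair[OF assms] by (intro mult_mono) (auto intro!: sum_nonneg simp: sd_nonneg)
  finally show ?thesis by simp
qed

lemma tr3_bound:
  assumes "density d X" "density d Y" "density d Z"
  shows "cmod (tr3f d X Y Z) \<le> 1"
proof -
  have "cmod (tr3f d X Y Z) \<le> (\<Sum>a<d. \<Sum>b<d. \<Sum>c<d. cmod (X a b) * cmod (Y b c) * cmod (Z c a))"
    unfolding tr3f_def
    by (rule order.trans[OF norm_sum sum_mono], rule order.trans[OF norm_sum sum_mono],
        rule order.trans[OF norm_sum sum_mono]) (simp add: norm_mult)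
  also have "\<dots> \<le> (\<Sum>a<d. \<Sum>b<d. \<Sum>c<d. (sd X a * sd Z a) * ((sd X b * sd Y b) * (sd Y c * sd Z c)))"
  proof (intro sum_mono)
    fix a b c assume "a \<in> {..<d}" "b \<in> {..<d}" "c \<in> {..<d}"
    then have "cmod (X a b) * cmod (Y b c) * cmod (Z c a) \<le> (sd X a * sd X b) * (sd Y b * sd Y c) * (sd Z c * sd Z a)"
      using assms by (intro mult_mono dens_entry) (auto simp: sd_nonneg)
    then show "cmod (X a b) * cmod (Y b c) * cmod (Z c a) \<le> (sd X a * sd Z a) * ((sd X b * sd Y b) * (sd Y c * sd Z c))"
      by (simp add: mult_ac)
  qed
  also have "\<dots> = (\<Sum>a<d. sd X a * sd Z a) * ((\<Sum>b<d. sd X b * sd Y b) * (\<Sum>c<d. sd Y c * sd Z c))"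
    by (simp only: sum_distrib_right, simp only: sum_distrib_left)
  also have "\<dots> \<le> 1 * (1 * 1)"
    using sd_pair[OF assms(1,3)] sd_pair[OF assms(1,2)] sd_pair[OF assms(2,3)]
    by (intro mult_mono) (auto intro!: sum_nonneg mult_nonneg_nonneg simp: sd_nonneg)
  finally show ?thesis by simp
qed


lemma mult_if0_r: "(x::complex) * (if P then y else 0) = (if P then x * y else 0)" by simp
lemma mult_if0_l: "(if P then y else 0) * (x::complex) = (if P then y * x else 0)" by simp

lemma sum_if_out: "(\<Sum>x\<in>A. if P then f x else 0) = (if P then (\<Sum>x\<in>A. f x) else (0::complex))"
  by simp

lemma tr2_shift:
  "trd d (mmd d (\<lambda>a b. X a b - (if a = b then c else 0)) (\<lambda>a b. Y a b - (if a = b then c else 0)))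
   = trd d (mmd d X Y) - c * (\<Sum>a<d. X a a) - c * (\<Sum>a<d. Y a a) + c^2 * of_nat d"
  unfolding tr2_eq
  by (simp add: algebra_simps sum.distrib sum_subtractf mult_if0_r mult_if0_l 
       sum_distrib_left power2_eq_square)

lemma tr3_shift:
  "tr3f d (\<lambda>a b. X a b - (if a = b then c else 0)) Y (\<lambda>a b. Z a b - (if a = b then c else 0))
   = tr3f d X Y Z - c * trd d (mmd d X Y) - c * trd d (mmd d Y Z) + c^2 * (\<Sum>a<d. Y a a)"
  unfolding tr2_eq tr3f_def
  by (simp add: algebra_simps sum.distrib sum_subtractf mult_if0_r mult_if0_l sum_if_out
       sum_distrib_left power2_eq_square)

lemma cs_sum:
  fixes a b :: "'a \<Rightarrow> real"
  shows "(\<Sum>i\<in>I. a i * b i)\<^sup>2 \<le> (\<Sum>i\<in>I. (a i)\<^sup>2) * (\<Sum>i\<in>I. (b i)\<^sup>2)"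
proof (cases "(\<Sum>i\<in>I. (b i)\<^sup>2) > 0")
  case False
  then have "(\<Sum>i\<in>I. (b i)\<^sup>2) = 0" by (meson not_less order_antisym sum_nonneg zero_le_power2)
  then have "\<forall>i\<in>I. b i = 0 \<or> infinite I" using sum_nonneg_eq_0_iff[of I "\<lambda>i. (b i)^2"] by auto
  then have "(\<Sum>i\<in>I. a i * b i) = 0" by (metis (no_types, lifting) mult_zero_right sum.infinite sum.neutral)
  then show ?thesis by (simp add: sum_nonneg)
next
  case True
  define r where "r = (\<Sum>i\<in>I. a i * b i) / (\<Sum>i\<in>I. (b i)\<^sup>2)"
  have "0 \<le> (\<Sum>i\<in>I. (a i - r * b i)\<^sup>2)"
    by (simp add: sum_nonneg)
  also have "\<dots> = (\<Sum>i\<in>I. (a i)\<^sup>2) - 2 * r * (\<Sum>i\<in>I. a i * b i) + r\<^sup>2 * (\<Sum>i\<in>I. (b i)\<^sup>2)"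
    by (simp add: algebra_simps power2_eq_square sum_distrib_left flip: sum.distrib)
  also have "\<dots> = (\<Sum>i\<in>I. (a i)\<^sup>2) - ((\<Sum>i\<in>I. a i * b i))\<^sup>2 / (\<Sum>i\<in>I. (b i)\<^sup>2)"
    by (simp add: r_def power2_eq_square)
  finally have "((\<Sum>i\<in>I. a i * b i))\<^sup>2 / (\<Sum>i\<in>I. (b i)\<^sup>2) \<le> (\<Sum>i\<in>I. (a i)\<^sup>2)"
    by simp
  then show ?thesis by (simp add: pos_divide_le_eq True)
qed

lemma qf_le_norm:
  assumes "density d R"
  shows "Re (qf d R v) \<le> (\<Sum>y<d. (cmod (v y))\<^sup>2)"
proof -
  have "Re (qf d R v) \<le> cmod (qf d R v)" by (rule complex_Re_le_cmod)
  also have "\<dots> \<le> (\<Sum>i<d. \<Sum>j<d. cmod (v i) * cmod (R i j) * cmod (v j))"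
    unfolding qf_def
    by (rule order.trans[OF norm_sum sum_mono], rule order.trans[OF norm_sum sum_mono])
       (simp add: norm_mult)
  also have "\<dots> \<le> (\<Sum>i<d. \<Sum>j<d. (cmod (v i) * sd R i) * (cmod (v j) * sd R j))"
  proof (intro sum_mono)
    fix i j assume "i \<in> {..<d}" "j \<in> {..<d}"
    then have "cmod (v i) * cmod (R i j) * cmod (v j) \<le> cmod (v i) * (sd R i * sd R j) * cmod (v j)"
      using assms by (intro mult_mono dens_entry) (auto simp: sd_nonneg)
    then show "cmod (v i) * cmod (R i j) * cmod (v j) \<le> (cmod (v i) * sd R i) * (cmod (v j) * sd R j)"
      by (simp add: mult_ac)
  qed
  also have "\<dots> = (\<Sum>i<d. cmod (v i) * sd R i)\<^sup>2"
    by (simp add: power2_eq_square sum_product)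
  also have "\<dots> \<le> (\<Sum>i<d. (cmod (v i))\<^sup>2) * (\<Sum>i<d. (sd R i)\<^sup>2)"
    by (rule cs_sum)
  also have "\<dots> = (\<Sum>i<d. (cmod (v i))\<^sup>2)" using sd_sum_sq[OF assms] by simp
  finally show ?thesis .
qed

lemma key_ineq:
  assumes R: "density d R" and d: "d \<ge> 1"
  shows "Re (tr3f d R R R) - (Re (trd d (mmd d R R)))\<^sup>2 \<le> Re (trd d (mmd d R R)) - 1 / real d"
proof -
  define c :: complex where "c = 1 / of_nat d"
  define H where "H = (\<lambda>a b. R a b - (if a = b then c else 0))"
  have trR: "(\<Sum>a<d. R a a) = 1" using dens_tr[OF R] .
  have hH: "cnj (H a b) = H b a" if "a < d" "b < d" for a b
    using dens_herm[OF R that(2,1)] that unfolding H_def c_def by auto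
  have "0 \<le> (\<Sum>x<d. (\<Sum>y<d. (cmod (H y x))\<^sup>2) - Re (qf d R (\<lambda>y. H y x)))"
    by (intro sum_nonneg) (simp add: qf_le_norm[OF R])
  also have "\<dots> = (\<Sum>x<d. \<Sum>y<d. (cmod (H y x))\<^sup>2) - Re (\<Sum>x<d. qf d R (\<lambda>y. H y x))"
    by (simp add: sum_subtractf)
  also have "(\<Sum>x<d. \<Sum>y<d. (cmod (H y x))\<^sup>2) = Re (trd d (mmd d H H))"
  proof -
    have "(\<Sum>x<d. \<Sum>y<d. (cmod (H y x))\<^sup>2) = (\<Sum>x<d. \<Sum>y<d. Re (H x y * H y x))"
    proof (intro sum.cong refl)
      fix x y assume "x \<in> {..<d}" "y \<in> {..<d}"
      then have "H x y = cnj (H y x)" using hH by simp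
      then show "(cmod (H y x))\<^sup>2 = Re (H x y * H y x)"
        by (simp add: cmod_def power2_eq_square)
    qed
    also have "\<dots> = Re (trd d (mmd d H H))" unfolding tr2_eq by simp
    finally show ?thesis .
  qed
  also have "(\<Sum>x<d. qf d R (\<lambda>y. H y x)) = tr3f d H R H"
    unfolding qf_def tr3f_def
    by (intro sum.cong refl) (simp add: hH)
  finally have ineq: "0 \<le> Re (trd d (mmd d H H)) - Re (tr3f d H R H)" .
  have e2: "trd d (mmd d H H) = trd d (mmd d R R) - c"
    unfolding H_def tr2_shift trR using d by (simp add: c_def power2_eq_square)
  have e3: "tr3f d H R H = tr3f d R R R - 2 * c * trd d (mmd d R R) + c^2"
    unfolding H_def tr3_shift trR by simp
  have rc: "Re c = 1 / real d" "Re (c^2) = (1 / real d)^2" unfolding c_def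
    by (simp_all add: power2_eq_square)
  define p2 where "p2 = Re (trd d (mmd d R R))"
  define p3 where "p3 = Re (tr3f d R R R)"
  have "Re (2 * c * trd d (mmd d R R)) = 2 * (1 / real d) * p2"
    unfolding c_def p2_def by simp
  then have "0 \<le> (p2 - 1 / real d) - (p3 - 2 * (1 / real d) * p2 + (1 / real d)^2)"
    using ineq unfolding e2 e3 p2_def p3_def using rc by (simp add: c_def)
  then have "p3 - p2^2 \<le> p2 - 1 / real d - (p2 - 1 / real d)^2"
    by (simp add: power2_eq_square algebra_simps)
  also have "\<dots> \<le> p2 - 1 / real d" by simp
  finally show ?thesis unfolding p2_def p3_def .
qed


definition Ssum :: "nat \<Rightarrow> (nat \<Rightarrow> nat \<Rightarrow> nat \<Rightarrow> complex) \<Rightarrow> nat \<Rightarrow> nat \<Rightarrow> complex" where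
  "Ssum T \<rho> a b = (\<Sum>t<T. \<rho> t a b)"

lemma Ssum_avg: "T \<ge> 1 \<Longrightarrow> Ssum T \<rho> = (\<lambda>a b. of_nat T * rho_avg T \<rho> a b)"
  unfolding Ssum_def rho_avg_def by (intro ext) simp

lemma qf_avg: "qf d (rho_avg T \<rho>) v = (\<Sum>t<T. qf d (\<rho> t) v) / of_nat T"
proof -
  have "(\<Sum>t<T. qf d (\<rho> t) v) = (\<Sum>i<d. \<Sum>j<d. \<Sum>t<T. cnj (v i) * \<rho> t i j * v j)"
    unfolding qf_def by (rule sum3_rot)
  then show ?thesis unfolding qf_def rho_avg_def
    by (simp add: sum_divide_distrib sum_distrib_left sum_distrib_right)
qed

lemma avg_density:
  assumes T: "T \<ge> 1" and dens: "\<forall>t<T. density d (\<rho> t)"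
  shows "density d (rho_avg T \<rho>)"
proof -
  have "qf d (rho_avg T \<rho>) v \<in> \<real> \<and> 0 \<le> Re (qf d (rho_avg T \<rho>) v)" for v
  proof -
    have r: "qf d (\<rho> t) v \<in> \<real>" "0 \<le> Re (qf d (\<rho> t) v)" if "t < T" for t
      using dens_qf dens that by blast+
    have "(\<Sum>t<T. qf d (\<rho> t) v) \<in> \<real>" using r(1) by (intro sum_in_Reals) auto
    moreover have "0 \<le> Re (\<Sum>t<T. qf d (\<rho> t) v)" unfolding Re_sum using r(2) by (intro sum_nonneg) auto
    ultimately show ?thesis unfolding qf_avg
      by (auto simp: Reals_divide divide_nonneg_pos)
  qed
  moreover have "(\<Sum>i<d. rho_avg T \<rho> i i) = 1"
  proof -
    have "(\<Sum>i<d. rho_avg T \<rho> i i) = (\<Sum>t<T. \<Sum>i<d. \<rho> t i i) / of_nat T"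
      unfolding rho_avg_def by (simp add: sum_divide_distrib[symmetric] sum.swap[of _ "{..<d}"])
    also have "\<dots> = 1" using dens dens_tr T by simp
    finally show ?thesis .
  qed
  ultimately show ?thesis unfolding density_def qf_def by blast
qed

lemma tr2_scale: "trd d (mmd d (\<lambda>a b. c * X a b) (\<lambda>a b. c * Y a b)) = c^2 * trd d (mmd d X Y)"
  unfolding tr2_eq by (simp add: sum_distrib_left power2_eq_square mult_ac)

lemma tr3_scale: "tr3f d (\<lambda>a b. c * X a b) (\<lambda>a b. c * Y a b) (\<lambda>a b. c * Z a b) = c^3 * tr3f d X Y Z"
  unfolding tr3f_def by (simp add: sum_distrib_left power3_eq_cube mult_ac)


definition G :: "nat \<Rightarrow> nat \<Rightarrow> (nat \<Rightarrow> nat \<Rightarrow> nat \<Rightarrow> complex) \<Rightarrow> (nat \<Rightarrow> nat) \<Rightarrow> complex" where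
  "G d T \<rho> \<pi> = (\<Sum>a\<in>basis d T. \<Prod>t<T. \<rho> t (a ! t) (a ! \<pi> t))"

lemma basis_PiE:
  "(\<Sum>a\<in>basis d T. F a) = (\<Sum>g\<in>PiE {..<T} (\<lambda>_. {..<d}). F (map g [0..<T]))"
proof (rule sum.reindex_bij_witness[of _ "\<lambda>g. map g [0..<T]" "\<lambda>a t. if t < T then a ! t else undefined"])
  fix a assume a: "a \<in> basis d T"
  then have l: "length a = T" unfolding basis_def by auto
  show "map (\<lambda>t. if t < T then a ! t else undefined) [0..<T] = a"
    using l by (intro nth_equalityI) auto
  then show "F (map (\<lambda>t. if t < T then a ! t else undefined) [0..<T]) = F a" by simp
  show "(\<lambda>t. if t < T then a ! t else undefined) \<in> PiE {..<T} (\<lambda>_. {..<d})"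
    using a unfolding basis_def PiE_def extensional_def
    by (auto simp: nth_mem subsetD) (meson lessThan_iff nth_mem subsetD)
next
  fix g assume g: "g \<in> PiE {..<T} (\<lambda>_. {..<d})"
  show "(\<lambda>t. if t < T then map g [0..<T] ! t else undefined) = g"
    using g by (intro ext) (auto simp: PiE_def extensional_def)
  show "map g [0..<T] \<in> basis d T"
    using g unfolding basis_def by (auto simp: PiE_def)
qed

lemma G_PiE:
  assumes "\<And>t. t < T \<Longrightarrow> \<pi> t < T"
  shows "G d T \<rho> \<pi> = (\<Sum>g\<in>PiE {..<T} (\<lambda>_. {..<d}). \<Prod>t<T. \<rho> t (g t) (g (\<pi> t)))"
  unfolding G_def basis_PiE using assms by (intro sum.cong refl prod.cong) auto

lemma sum_PiE_insert:
  assumes "x \<notin> A"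
  shows "(\<Sum>g\<in>PiE (insert x A) B. F g) = (\<Sum>y\<in>B x. \<Sum>g\<in>PiE A B. F (g(x := y)))"
proof -
  have "(\<Sum>g\<in>PiE (insert x A) B. F g) = (\<Sum>(y,g)\<in>B x \<times> PiE A B. F (g(x := y)))"
    using assms
    by (intro sum.reindex_bij_witness[of _ "\<lambda>(y,g). g(x := y)" "\<lambda>g. (g x, g(x := undefined))"])
       (auto simp: PiE_def extensional_def)
  also have "\<dots> = (\<Sum>y\<in>B x. \<Sum>g\<in>PiE A B. F (g(x := y)))"
    by (subst sum.cartesian_product) auto
  finally show ?thesis .
qed

lemma sum_PiE_factor:
  fixes F :: "('a \<Rightarrow> 'b) \<Rightarrow> complex"
  assumes "finite J" "M \<inter> J = {}"
    and Fdep: "\<And>g g'. (\<forall>t\<in>M. g t = g' t) \<Longrightarrow> F g = F g'"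
  shows "(\<Sum>g\<in>PiE (M \<union> J) D. F g * (\<Prod>t\<in>J. h t (g t)))
       = (\<Sum>g\<in>PiE M D. F g) * (\<Prod>t\<in>J. \<Sum>y\<in>D t. h t y)"
  using assms(1,2)
proof (induction J rule: finite_induct)
  case empty
  then show ?case by simp
next
  case (insert x J)
  have xM: "x \<notin> M \<union> J" using insert by auto
  have "(\<Sum>g\<in>PiE (M \<union> insert x J) D. F g * (\<Prod>t\<in>insert x J. h t (g t)))
      = (\<Sum>y\<in>D x. \<Sum>g\<in>PiE (M \<union> J) D. F (g(x := y)) * (\<Prod>t\<in>insert x J. h t ((g(x := y)) t)))"
  proof -
    have "M \<union> insert x J = insert x (M \<union> J)" by auto
    then show ?thesis by (simp only: sum_PiE_insert[OF xM])
  qed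
  also have "\<dots> = (\<Sum>y\<in>D x. \<Sum>g\<in>PiE (M \<union> J) D. h x y * (F g * (\<Prod>t\<in>J. h t (g t))))"
  proof (intro sum.cong refl)
    fix y g
    have "F (g(x := y)) = F g" using xM by (intro Fdep) auto
    moreover have "(\<Prod>t\<in>insert x J. h t ((g(x := y)) t)) = h x y * (\<Prod>t\<in>J. h t (g t))"
    proof -
      have p: "(\<Prod>t\<in>J. h t ((g(x := y)) t)) = (\<Prod>t\<in>J. h t (g t))"
        using insert.hyps by (intro prod.cong) auto
      show ?thesis by (simp only: prod.insert[OF insert.hyps] p fun_upd_same)
    qed
    ultimately show "F (g(x := y)) * (\<Prod>t\<in>insert x J. h t ((g(x := y)) t)) = h x y * (F g * (\<Prod>t\<in>J. h t (g t)))"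
      by (simp add: mult_ac)
  qed
  also have "\<dots> = (\<Sum>y\<in>D x. h x y) * (\<Sum>g\<in>PiE (M \<union> J) D. F g * (\<Prod>t\<in>J. h t (g t)))"
    by (simp only: sum_distrib_right, simp only: sum_distrib_left)
  also have "\<dots> = (\<Sum>y\<in>D x. h x y) * ((\<Sum>g\<in>PiE M D. F g) * (\<Prod>t\<in>J. \<Sum>y\<in>D t. h t y))"
    using insert by simp
  also have "\<dots> = (\<Sum>g\<in>PiE M D. F g) * (\<Prod>t\<in>insert x J. \<Sum>y\<in>D t. h t y)"
    using insert.hyps by (simp add: mult_ac)
  finally show ?case .
qed

lemma G_support:
  assumes M: "M \<subseteq> {..<T}" and fx: "\<And>t. t < T \<Longrightarrow> t \<notin> M \<Longrightarrow> \<pi> t = t"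
    and inM: "\<And>t. t \<in> M \<Longrightarrow> \<pi> t \<in> M" and dens: "\<forall>t<T. density d (\<rho> t)"
  shows "G d T \<rho> \<pi> = (\<Sum>g\<in>PiE M (\<lambda>_. {..<d}). \<Prod>t\<in>M. \<rho> t (g t) (g (\<pi> t)))"
proof -
  define J where "J = {..<T} - M"
  have U: "{..<T} = M \<union> J" and disj: "M \<inter> J = {}" and fJ: "finite J" and fM: "finite M"
    using M unfolding J_def by (auto intro: finite_subset)
  have pT: "\<pi> t < T" if "t < T" for t
    using that M fx inM by (cases "t \<in> M") auto
  have "G d T \<rho> \<pi> = (\<Sum>g\<in>PiE (M \<union> J) (\<lambda>_. {..<d}). \<Prod>t\<in>M \<union> J. \<rho> t (g t) (g (\<pi> t)))"
  proof -
    have "G d T \<rho> \<pi> = (\<Sum>g\<in>PiE {..<T} (\<lambda>_. {..<d}). \<Prod>t\<in>{..<T}. \<rho> t (g t) (g (\<pi> t)))"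
      by (rule G_PiE[OF pT])
    then show ?thesis unfolding U .
  qed
  also have "\<dots> = (\<Sum>g\<in>PiE (M \<union> J) (\<lambda>_. {..<d}). (\<Prod>t\<in>M. \<rho> t (g t) (g (\<pi> t))) * (\<Prod>t\<in>J. \<rho> t (g t) (g t)))"
  proof (intro sum.cong refl)
    fix g
    have "(\<Prod>t\<in>M \<union> J. \<rho> t (g t) (g (\<pi> t))) = (\<Prod>t\<in>M. \<rho> t (g t) (g (\<pi> t))) * (\<Prod>t\<in>J. \<rho> t (g t) (g (\<pi> t)))"
      using fM fJ disj by (rule prod.union_disjoint)
    also have "(\<Prod>t\<in>J. \<rho> t (g t) (g (\<pi> t))) = (\<Prod>t\<in>J. \<rho> t (g t) (g t))"
      using fx unfolding J_def by (intro prod.cong) auto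
    finally show "(\<Prod>t\<in>M \<union> J. \<rho> t (g t) (g (\<pi> t))) = (\<Prod>t\<in>M. \<rho> t (g t) (g (\<pi> t))) * (\<Prod>t\<in>J. \<rho> t (g t) (g t))" .
  qed
  also have "\<dots> = (\<Sum>g\<in>PiE M (\<lambda>_. {..<d}). \<Prod>t\<in>M. \<rho> t (g t) (g (\<pi> t))) * (\<Prod>t\<in>J. \<Sum>y\<in>{..<d}. \<rho> t y y)"
    by (rule sum_PiE_factor[OF fJ disj]) (intro prod.cong refl, auto simp: inM)
  also have "(\<Prod>t\<in>J. \<Sum>y\<in>{..<d}. \<rho> t y y) = 1"
    using dens dens_tr unfolding J_def by (intro prod.neutral) auto
  finally show ?thesis by simp
qed

lemma sum_PiE_0: "(\<Sum>g\<in>PiE {} D. F g) = F (\<lambda>_. undefined)"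
  by (simp add: PiE_empty_domain)

lemma sum_PiE_ins: "x \<notin> A \<Longrightarrow> (\<Sum>g\<in>PiE (insert x A) D. F g) = (\<Sum>y\<in>D x. \<Sum>g\<in>PiE A D. F (g(x := y)))"
  by (rule sum_PiE_insert)

definition tau :: "nat \<Rightarrow> nat \<Rightarrow> nat \<Rightarrow> nat" where
  "tau i j t = (if t = i then j else if t = j then i else t)"

lemma G_id:
  assumes "\<And>t. t < T \<Longrightarrow> \<pi> t = t" "\<forall>t<T. density d (\<rho> t)"
  shows "G d T \<rho> \<pi> = 1"
  using G_support[of "{}" T \<pi> d \<rho>] assms by (simp add: sum_PiE_0)

lemma G_2:
  assumes "i < T" "j < T" "i \<noteq> j" "\<pi> i = j" "\<pi> j = i" "\<And>t. t < T \<Longrightarrow> t \<notin> {i,j} \<Longrightarrow> \<pi> t = t"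
    "\<forall>t<T. density d (\<rho> t)"
  shows "G d T \<rho> \<pi> = trd d (mmd d (\<rho> i) (\<rho> j))"
proof -
  have "G d T \<rho> \<pi> = (\<Sum>g\<in>PiE {i,j} (\<lambda>_. {..<d}). \<Prod>t\<in>{i,j}. \<rho> t (g t) (g (\<pi> t)))"
    using assms by (intro G_support) auto
  also have "\<dots> = trd d (mmd d (\<rho> i) (\<rho> j))"
    using assms(3-5) by (simp add: sum_PiE_ins sum_PiE_0 tr2_eq)
  finally show ?thesis .
qed

lemma G_3:
  assumes "a < T" "b < T" "c < T" "a \<noteq> b" "a \<noteq> c" "b \<noteq> c"
    "\<pi> a = b" "\<pi> b = c" "\<pi> c = a" "\<And>t. t < T \<Longrightarrow> t \<notin> {a,b,c} \<Longrightarrow> \<pi> t = t"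
    "\<forall>t<T. density d (\<rho> t)"
  shows "G d T \<rho> \<pi> = tr3f d (\<rho> a) (\<rho> b) (\<rho> c)"
proof -
  have "G d T \<rho> \<pi> = (\<Sum>g\<in>PiE {a,b,c} (\<lambda>_. {..<d}). \<Prod>t\<in>{a,b,c}. \<rho> t (g t) (g (\<pi> t)))"
    using assms by (intro G_support) auto
  also have "\<dots> = tr3f d (\<rho> a) (\<rho> b) (\<rho> c)"
    using assms(4-9) by (simp add: sum_PiE_ins sum_PiE_0 tr3f_def mult_ac)
  finally show ?thesis .
qed

lemma G_22:
  assumes "i < T" "j < T" "k < T" "l < T" "i \<noteq> j" "i \<noteq> k" "i \<noteq> l" "j \<noteq> k" "j \<noteq> l" "k \<noteq> l"
    "\<pi> i = j" "\<pi> j = i" "\<pi> k = l" "\<pi> l = k" "\<And>t. t < T \<Longrightarrow> t \<notin> {i,j,k,l} \<Longrightarrow> \<pi> t = t"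
    "\<forall>t<T. density d (\<rho> t)"
  shows "G d T \<rho> \<pi> = trd d (mmd d (\<rho> i) (\<rho> j)) * trd d (mmd d (\<rho> k) (\<rho> l))"
proof -
  have "G d T \<rho> \<pi> = (\<Sum>g\<in>PiE {i,j,k,l} (\<lambda>_. {..<d}). \<Prod>t\<in>{i,j,k,l}. \<rho> t (g t) (g (\<pi> t)))"
    using assms by (intro G_support) auto
  also have "\<dots> = (\<Sum>x<d. \<Sum>y<d. \<Sum>z<d. \<Sum>w<d. \<rho> i x y * \<rho> j y x * (\<rho> k z w * \<rho> l w z))"
    using assms(5-14) by (simp add: sum_PiE_ins sum_PiE_0 mult_ac)
  also have "\<dots> = trd d (mmd d (\<rho> i) (\<rho> j)) * trd d (mmd d (\<rho> k) (\<rho> l))"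
    unfolding tr2_eq by (simp only: sum_distrib_right, simp only: sum_distrib_left)
  finally show ?thesis .
qed


definition sw :: "nat \<Rightarrow> nat \<Rightarrow> nat list \<Rightarrow> nat list" where
  "sw i j z = z[i := z ! j, j := z ! i]"

lemma basis_iff: "z \<in> basis d T \<longleftrightarrow> length z = T \<and> (\<forall>t<T. z ! t < d)"
  unfolding basis_def by (auto simp: set_conv_nth)

lemma finite_basis: "finite (basis d T)"
proof -
  have "basis d T = {xs. set xs \<subseteq> {..<d} \<and> length xs = T}" unfolding basis_def by auto
  then show ?thesis using finite_lists_length_eq[of "{..<d}" T] by simp
qed

lemma tau_lt: "i < T \<Longrightarrow> j < T \<Longrightarrow> t < T \<Longrightarrow> tau i j t < T"
  unfolding tau_def by auto

lemma sw_nth: "length z = T \<Longrightarrow> i < T \<Longrightarrow> j < T \<Longrightarrow> t < T \<Longrightarrow> sw i j z ! t = z ! tau i j t"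
  unfolding sw_def tau_def by (auto simp: nth_list_update)

lemma sw_len: "length (sw i j z) = length z"
  unfolding sw_def by simp

lemma sw_basis: "z \<in> basis d T \<Longrightarrow> i < T \<Longrightarrow> j < T \<Longrightarrow> sw i j z \<in> basis d T"
  unfolding basis_iff using sw_nth tau_lt sw_len by metis

lemma expect_eq: "expect I P Y = (\<Sum>a\<in>I. \<Sum>c\<in>I. P a c * Y c a)"
  unfolding expect_def mat_trace_def mat_mult_def by simp

lemma expect_cong: "(\<And>c a. c \<in> I \<Longrightarrow> a \<in> I \<Longrightarrow> Y c a = Y' c a) \<Longrightarrow> expect I P Y = expect I P Y'"
  unfolding expect_eq by (intro sum.cong refl) auto

lemma expect_fun:
  assumes "finite I" "\<And>a. a \<in> I \<Longrightarrow> f a \<in> I"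
  shows "expect I P (\<lambda>c a. if c = f a then 1 else 0) = (\<Sum>a\<in>I. P a (f a))"
  unfolding expect_eq using assms by (simp add: mult_if0_r sum.delta)

lemma expect_sum: "expect I P (\<lambda>c a. \<Sum>k\<in>K. X k c a) = (\<Sum>k\<in>K. expect I P (X k))"
  unfolding expect_eq sum_distrib_left by (rule sum3_rot[symmetric])

lemma expect_lin: "expect I P (\<lambda>c a. \<alpha> * X c a + \<beta> * Y c a) = \<alpha> * expect I P X + \<beta> * expect I P Y"
  unfolding expect_eq by (simp add: algebra_simps sum.distrib sum_distrib_left)

lemma expect_scale: "expect I P (\<lambda>c a. \<alpha> * X c a) = \<alpha> * expect I P X"
  unfolding expect_eq by (simp add: algebra_simps sum_distrib_left)

lemma swap_op_sw: "swap_op i j = (\<lambda>c a. if c = sw i j a then 1 else 0)"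
  unfolding swap_op_def sw_def by (intro ext) simp

lemma E_S:
  assumes "i < T" "j < T"
  shows "expect (basis d T) (prod_state T \<rho>) (swap_op i j) = G d T \<rho> (tau i j)"
proof -
  have "expect (basis d T) (prod_state T \<rho>) (swap_op i j) = (\<Sum>a\<in>basis d T. prod_state T \<rho> a (sw i j a))"
    unfolding swap_op_sw using assms by (intro expect_fun finite_basis sw_basis)
  also have "\<dots> = G d T \<rho> (tau i j)"
    unfolding G_def prod_state_def
    by (intro sum.cong refl prod.cong) (use assms in \<open>auto simp: sw_nth basis_iff\<close>)
  finally show ?thesis .
qed

lemma mm_SS:
  assumes "i < T" "j < T" "k < T" "l < T" "a \<in> basis d T"
  shows "mat_mult (basis d T) (swap_op i j) (swap_op k l) c a = (if c = sw i j (sw k l a) then 1 else 0)"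
  unfolding mat_mult_def swap_op_sw using assms
  by (simp add: mult_if0_r mult_if0_l sum.delta' finite_basis sw_basis cong: if_cong)

lemma E_SS:
  assumes "i < T" "j < T" "k < T" "l < T"
  shows "expect (basis d T) (prod_state T \<rho>) (mat_mult (basis d T) (swap_op i j) (swap_op k l))
       = G d T \<rho> (\<lambda>t. tau k l (tau i j t))"
proof -
  have "expect (basis d T) (prod_state T \<rho>) (mat_mult (basis d T) (swap_op i j) (swap_op k l))
      = expect (basis d T) (prod_state T \<rho>) (\<lambda>c a. if c = sw i j (sw k l a) then 1 else 0)"
    using assms by (intro expect_cong) (simp add: mm_SS)
  also have "\<dots> = (\<Sum>a\<in>basis d T. prod_state T \<rho> a (sw i j (sw k l a)))"
    using assms by (intro expect_fun finite_basis sw_basis)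
  also have "\<dots> = G d T \<rho> (\<lambda>t. tau k l (tau i j t))"
    unfolding G_def prod_state_def
    by (intro sum.cong refl prod.cong) (use assms in \<open>auto simp: sw_nth basis_iff sw_len tau_lt\<close>)
  finally show ?thesis .
qed

lemma E_id:
  assumes "\<forall>t<T. density d (\<rho> t)"
  shows "expect (basis d T) (prod_state T \<rho>) id_op = 1"
proof -
  have "expect (basis d T) (prod_state T \<rho>) id_op = (\<Sum>a\<in>basis d T. prod_state T \<rho> a a)"
    unfolding id_op_def using expect_fun[OF finite_basis, where f="\<lambda>a. a"] by simp
  also have "\<dots> = G d T \<rho> (\<lambda>t. t)" unfolding G_def prod_state_def by simp
  also have "\<dots> = 1" using assms by (intro G_id) auto
  finally show ?thesis .
qed


definition Pairs :: "nat \<Rightarrow> (nat \<times> nat) set" where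
  "Pairs T = Sigma {..<T} (\<lambda>i. {..<T} - {i})"

definition Uop :: "nat \<Rightarrow> nat list \<Rightarrow> nat list \<Rightarrow> complex" where
  "Uop T xs ys = (\<Sum>p\<in>Pairs T. swap_op (fst p) (snd p) xs ys)"

lemma finite_Pairs: "finite (Pairs T)" unfolding Pairs_def by auto

lemma Pairs_sum: "(\<Sum>p\<in>Pairs T. f p) = (\<Sum>i<T. \<Sum>j<T. if i \<noteq> j then f (i, j) else 0)"
proof -
  have "(\<Sum>p\<in>Pairs T. f p) = (\<Sum>i<T. \<Sum>j\<in>{..<T} - {i}. f (i, j))"
    unfolding Pairs_def by (subst sum.Sigma) auto
  also have "\<dots> = (\<Sum>i<T. \<Sum>j<T. if i \<noteq> j then f (i, j) else 0)"
  proof (rule sum.cong[OF refl])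
    fix i
    have e: "{..<T} - {i} = {j \<in> {..<T}. i \<noteq> j}" by auto
    show "(\<Sum>j\<in>{..<T} - {i}. f (i, j)) = (\<Sum>j<T. if i \<noteq> j then f (i, j) else 0)"
      by (simp only: e sum.inter_filter[OF finite_lessThan])
  qed
  finally show ?thesis .
qed

lemma Uop_nested: "Uop T xs ys = (\<Sum>i<T. \<Sum>j\<in>{..<T} - {i}. swap_op i j xs ys)"
  unfolding Uop_def Pairs_def by (subst sum.Sigma) (auto simp: split_def)

lemma A_op_U: "A_op d T = (\<lambda>c a. (1 / (of_nat T)^2) * Uop T c a + (- 1 / of_nat d) * id_op c a)"
  unfolding A_op_def Uop_nested
  by (intro ext) (simp add: field_simps)

lemma mm_sums:
  "mat_mult I (\<lambda>c y. \<Sum>p\<in>K. X p c y) (\<lambda>y a. \<Sum>q\<in>L. Y q y a) c a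
   = (\<Sum>p\<in>K. \<Sum>q\<in>L. mat_mult I (X p) (Y q) c a)"
  unfolding mat_mult_def sum_product
  by (simp add: sum3_rot[where A=I])

lemma E_U:
  assumes "T \<ge> 1"
  shows "expect (basis d T) (prod_state T \<rho>) (Uop T) = (\<Sum>p\<in>Pairs T. G d T \<rho> (tau (fst p) (snd p)))"
proof -
  have "Uop T = (\<lambda>c a. \<Sum>p\<in>Pairs T. swap_op (fst p) (snd p) c a)" unfolding Uop_def by (intro ext) simp
  then have "expect (basis d T) (prod_state T \<rho>) (Uop T)
     = (\<Sum>p\<in>Pairs T. expect (basis d T) (prod_state T \<rho>) (swap_op (fst p) (snd p)))"
    by (simp add: expect_sum)
  then show ?thesis
    by (auto intro!: sum.cong E_S simp: Pairs_def)
qed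

lemma E_UU:
  shows "expect (basis d T) (prod_state T \<rho>) (mat_mult (basis d T) (Uop T) (Uop T))
     = (\<Sum>p\<in>Pairs T. \<Sum>q\<in>Pairs T. G d T \<rho> (\<lambda>t. tau (fst q) (snd q) (tau (fst p) (snd p) t)))"
proof -
  have "mat_mult (basis d T) (Uop T) (Uop T) = (\<lambda>c a. \<Sum>p\<in>Pairs T. \<Sum>q\<in>Pairs T.
          mat_mult (basis d T) (swap_op (fst p) (snd p)) (swap_op (fst q) (snd q)) c a)"
    unfolding Uop_def by (intro ext, rule mm_sums)
  then have "expect (basis d T) (prod_state T \<rho>) (mat_mult (basis d T) (Uop T) (Uop T))
     = (\<Sum>p\<in>Pairs T. \<Sum>q\<in>Pairs T. expect (basis d T) (prod_state T \<rho>)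
          (mat_mult (basis d T) (swap_op (fst p) (snd p)) (swap_op (fst q) (snd q))))"
    by (simp add: expect_sum)
  then show ?thesis
    by (auto intro!: sum.cong E_SS simp: Pairs_def)
qed

lemma expect_lin3: "expect I P (\<lambda>c a. \<alpha> * X c a + \<beta> * Y c a + \<gamma> * Z c a)
   = \<alpha> * expect I P X + \<beta> * expect I P Y + \<gamma> * expect I P Z"
  unfolding expect_eq by (simp add: algebra_simps sum.distrib sum_distrib_left)

lemma var_formula:
  assumes T: "T \<ge> 1" and d: "d \<ge> 1" and dens: "\<forall>t<T. density d (\<rho> t)"
  shows "variance (basis d T) (prod_state T \<rho>) (A_op d T)
    = (expect (basis d T) (prod_state T \<rho>) (mat_mult (basis d T) (Uop T) (Uop T))
       - (expect (basis d T) (prod_state T \<rho>) (Uop T))^2) / (of_nat T)^4"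
proof -
  define B where "B = basis d T"
  define P where "P = prod_state T \<rho>"
  define EU where "EU = expect B P (Uop T)"
  define EUU where "EUU = expect B P (mat_mult B (Uop T) (Uop T))"
  have Eid: "expect B P id_op = 1" unfolding B_def P_def using E_id[OF dens] .
  have EA: "expect B P (A_op d T) = EU / (of_nat T)^2 - 1 / of_nat d"
    unfolding A_op_U expect_lin Eid EU_def by simp
  have mmAA: "mat_mult B (A_op d T) (A_op d T) c a =
      (1 / (of_nat T)^4) * mat_mult B (Uop T) (Uop T) c a
      + (- 2 / ((of_nat T)^2 * of_nat d)) * Uop T c a + (1 / (of_nat d)^2) * id_op c a"
    if "c \<in> B" "a \<in> B" for c a
  proof -
    have fB: "finite B" unfolding B_def by (rule finite_basis)
    have "mat_mult B (A_op d T) (A_op d T) c a = (\<Sum>y\<in>B.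
        (1 / (of_nat T)^4) * (Uop T c y * Uop T y a)
        + (- 1 / ((of_nat T)^2 * of_nat d)) * (if y = a then Uop T c y else 0)
        + (- 1 / ((of_nat T)^2 * of_nat d)) * (if c = y then Uop T y a else 0)
        + (1 / (of_nat d)^2) * (if c = y then id_op y a else 0))"
      unfolding mat_mult_def A_op_U
      by (intro sum.cong refl) (simp add: id_op_def algebra_simps power2_eq_square power4_eq_xxxx)
    also have "\<dots> = (1 / (of_nat T)^4) * mat_mult B (Uop T) (Uop T) c a
      + (- 2 / ((of_nat T)^2 * of_nat d)) * Uop T c a + (1 / (of_nat d)^2) * id_op c a"
    proof -
      have s1: "(\<Sum>y\<in>B. if y = a then Uop T c y else 0) = Uop T c a" using that fB by simp
      have s2: "(\<Sum>y\<in>B. if c = y then Uop T y a else 0) = Uop T c a" using that fB by simp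
      have s3: "(\<Sum>y\<in>B. if c = y then id_op y a else 0) = id_op c a" using that fB by simp
      show ?thesis
        unfolding sum.distrib sum_distrib_left[symmetric] s1 s2 s3 mat_mult_def
        by (simp add: algebra_simps)
    qed
    finally show ?thesis .
  qed
  have "expect B P (mat_mult B (A_op d T) (A_op d T)) =
      expect B P (\<lambda>c a. (1 / (of_nat T)^4) * mat_mult B (Uop T) (Uop T) c a
      + (- 2 / ((of_nat T)^2 * of_nat d)) * Uop T c a + (1 / (of_nat d)^2) * id_op c a)"
    by (intro expect_cong) (simp add: mmAA)
  also have "\<dots> = (1 / (of_nat T)^4) * EUU + (- 2 / ((of_nat T)^2 * of_nat d)) * EU + 1 / (of_nat d)^2"
    unfolding expect_lin3 EUU_def EU_def Eid by simp
  finally have EAA: "expect B P (mat_mult B (A_op d T) (A_op d T)) =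
      (1 / (of_nat T)^4) * EUU + (- 2 / ((of_nat T)^2 * of_nat d)) * EU + 1 / (of_nat d)^2" .
  have "variance B P (A_op d T) = (EUU - EU^2) / (of_nat T)^4"
    unfolding variance_def EAA EA using T d
    by (simp add: field_simps power2_eq_square power4_eq_xxxx)
  then show ?thesis unfolding B_def P_def EUU_def EU_def .
qed


definition t2 :: "nat \<Rightarrow> (nat \<Rightarrow> nat \<Rightarrow> nat \<Rightarrow> complex) \<Rightarrow> nat \<Rightarrow> nat \<Rightarrow> complex" where
  "t2 d \<rho> i j = trd d (mmd d (\<rho> i) (\<rho> j))"
definition t3 :: "nat \<Rightarrow> (nat \<Rightarrow> nat \<Rightarrow> nat \<Rightarrow> complex) \<Rightarrow> nat \<Rightarrow> nat \<Rightarrow> nat \<Rightarrow> complex" where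
  "t3 d \<rho> i j k = tr3f d (\<rho> i) (\<rho> j) (\<rho> k)"

definition EC where
  "EC d T \<rho> i j k l = G d T \<rho> (\<lambda>t. tau k l (tau i j t)) - G d T \<rho> (tau i j) * G d T \<rho> (tau k l)"

definition f1 where "f1 d \<rho> i j l = t3 d \<rho> i j l - t2 d \<rho> i j * t2 d \<rho> i l"
definition f2 where "f2 d \<rho> i j k = t3 d \<rho> i j k - t2 d \<rho> i j * t2 d \<rho> k i"
definition f3 where "f3 d \<rho> i j l = t3 d \<rho> i l j - t2 d \<rho> i j * t2 d \<rho> j l"
definition f4 where "f4 d \<rho> i j k = t3 d \<rho> i k j - t2 d \<rho> i j * t2 d \<rho> k j"

definition N :: "nat \<Rightarrow> nat \<Rightarrow> nat \<Rightarrow> real" where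
  "N x y z = (if x = y then 1 else 0) + (if x = z then 1 else 0) + (if y = z then 1 else 0)"

definition W where
  "W d \<rho> i j k l =
     (if i = k then Re (f1 d \<rho> i j l) + 2 * N i j l else 0)
   + (if i = l then Re (f2 d \<rho> i j k) + 2 * N i j k else 0)
   + (if j = k then Re (f3 d \<rho> i j l) + 2 * N i j l else 0)
   + (if j = l then Re (f4 d \<rho> i j k) + 2 * N i j k else 0)
   + (if i = k \<and> j = l then 2 else 0) + (if i = l \<and> j = k then 2 else 0)"

lemma N_nonneg: "N x y z \<ge> 0" unfolding N_def by simp
lemma N_distinct: "x \<noteq> y \<Longrightarrow> x \<noteq> z \<Longrightarrow> y \<noteq> z \<Longrightarrow> N x y z = 0" unfolding N_def by simp
lemma N_ge1: "x = y \<or> x = z \<or> y = z \<Longrightarrow> N x y z \<ge> 1" unfolding N_def by auto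

lemma t2_bound: "\<forall>t<T. density d (\<rho> t) \<Longrightarrow> i < T \<Longrightarrow> j < T \<Longrightarrow> cmod (t2 d \<rho> i j) \<le> 1"
  unfolding t2_def by (intro tr2_bound) auto
lemma t3_bound: "\<forall>t<T. density d (\<rho> t) \<Longrightarrow> i < T \<Longrightarrow> j < T \<Longrightarrow> k < T \<Longrightarrow> cmod (t3 d \<rho> i j k) \<le> 1"
  unfolding t3_def by (intro tr3_bound) auto

lemma f_gen_bound:
  assumes "cmod a \<le> 1" "cmod b \<le> 1" "cmod c \<le> 1"
  shows "- 2 \<le> Re (a - b * c)"
proof -
  have "cmod (a - b * c) \<le> cmod a + cmod b * cmod c" by (metis norm_mult norm_triangle_ineq4)
  also have "\<dots> \<le> 1 + 1 * 1" using assms by (intro add_mono mult_mono) auto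
  finally have "cmod (a - b * c) \<le> 2" by simp
  moreover have "- Re (a - b * c) \<le> cmod (a - b * c)"
    by (metis abs_Re_le_cmod abs_le_D2)
  ultimately show ?thesis by linarith
qed

lemma f_bounds:
  assumes "\<forall>t<T. density d (\<rho> t)" "a < T" "b < T" "c < T"
  shows "- 2 \<le> Re (f1 d \<rho> a b c)" "- 2 \<le> Re (f2 d \<rho> a b c)"
        "- 2 \<le> Re (f3 d \<rho> a b c)" "- 2 \<le> Re (f4 d \<rho> a b c)"
  unfolding f1_def f2_def f3_def f4_def
  using assms by (intro f_gen_bound t2_bound t3_bound; simp)+

lemma if_nonneg: "(c \<Longrightarrow> 0 \<le> x) \<Longrightarrow> 0 \<le> (if c then x else (0::real))" by simp

lemma brk_nonneg: "- 2 \<le> (r::real) \<Longrightarrow> x = y \<or> x = z \<or> y = z \<Longrightarrow> 0 \<le> r + 2 * N x y z"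
  using N_ge1[of x y z] by linarith

lemma G_tau:
  assumes "i < T" "j < T" "\<forall>t<T. density d (\<rho> t)"
  shows "G d T \<rho> (tau i j) = (if i = j then 1 else t2 d \<rho> i j)"
proof (cases "i = j")
  case True
  then show ?thesis using assms by (simp add: G_id tau_def)
next
  case False
  then show ?thesis unfolding t2_def using assms by (intro G_2 [THEN trans]) (auto simp: tau_def)
qed

lemma W_bound:
  assumes T: "i < T" "j < T" "k < T" "l < T" and dens: "\<forall>t<T. density d (\<rho> t)"
  shows "Re (if i \<noteq> j then (if k \<noteq> l then EC d T \<rho> i j k l else 0) else 0) \<le> W d \<rho> i j k l"
proof -
  note fb = f_bounds[OF dens]
  have b1: "0 \<le> Re (f1 d \<rho> i j l) + 2 * N i j l" if "i = j \<or> i = l \<or> j = l"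
    using that T by (intro brk_nonneg fb) auto
  have b2: "0 \<le> Re (f2 d \<rho> i j k) + 2 * N i j k" if "i = j \<or> i = k \<or> j = k"
    using that T by (intro brk_nonneg fb) auto
  have b3: "0 \<le> Re (f3 d \<rho> i j l) + 2 * N i j l" if "i = j \<or> i = l \<or> j = l"
    using that T by (intro brk_nonneg fb) auto
  have b4: "0 \<le> Re (f4 d \<rho> i j k) + 2 * N i j k" if "i = j \<or> i = k \<or> j = k"
    using that T by (intro brk_nonneg fb) auto
  have Gt: "G d T \<rho> (tau a b) = (if a = b then 1 else t2 d \<rho> a b)" if "a < T" "b < T" for a b
    using G_tau that dens by blast
  show ?thesis
  proof (cases "i = j \<or> k = l")
    case True
    have w1: "0 \<le> (if i = k then Re (f1 d \<rho> i j l) + 2 * N i j l else 0)" using b1 True by auto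
    have w2: "0 \<le> (if i = l then Re (f2 d \<rho> i j k) + 2 * N i j k else 0)" using b2 True by auto
    have w3: "0 \<le> (if j = k then Re (f3 d \<rho> i j l) + 2 * N i j l else 0)" using b3 True by auto
    have w4: "0 \<le> (if j = l then Re (f4 d \<rho> i j k) + 2 * N i j k else 0)" using b4 True by auto
    have "0 \<le> W d \<rho> i j k l" unfolding W_def
      using w1 w2 w3 w4 by (simp only: add_nonneg_nonneg if_nonneg order.refl zero_le_numeral)
    then show ?thesis using True by auto
  next
    case False
    then have ij: "i \<noteq> j" and kl: "k \<noteq> l" by auto
    have t2b: "cmod (t2 d \<rho> a b) \<le> 1" if "a < T" "b < T" for a b using t2_bound dens that by blast
    show ?thesis
    proof (cases "i = k")
      case ik: True
      show ?thesis
      proof (cases "j = l")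
        case jl: True
        have G1: "G d T \<rho> (\<lambda>t. tau k l (tau i j t)) = 1"
          using ik jl dens by (intro G_id) (auto simp: tau_def)
        have "Re (EC d T \<rho> i j k l) = 1 - Re (t2 d \<rho> i j * t2 d \<rho> i j)"
          unfolding EC_def G1 using ik jl ij T by (simp add: Gt)
        also have "\<dots> \<le> 1 + cmod (t2 d \<rho> i j * t2 d \<rho> i j)"
          by (metis abs_Re_le_cmod abs_le_D2 add_le_cancel_left diff_conv_add_uminus)
        also have "\<dots> \<le> 1 + 1 * 1" unfolding norm_mult using t2b T
          by (intro add_left_mono mult_mono) auto
        finally have "Re (EC d T \<rho> i j k l) \<le> 2" by simp
        moreover have "0 \<le> Re (f1 d \<rho> i j l) + 2 * N i j l" using b1 jl by auto
        moreover have "0 \<le> Re (f4 d \<rho> i j k) + 2 * N i j k" using b4 ik by auto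
        moreover have "W d \<rho> i j k l = (Re (f1 d \<rho> i j l) + 2 * N i j l) + (Re (f4 d \<rho> i j k) + 2 * N i j k) + 2"
          unfolding W_def using ik jl ij by simp
        ultimately show ?thesis using ij kl by simp
      next
        case jl: False
        have G3: "G d T \<rho> (\<lambda>t. tau k l (tau i j t)) = t3 d \<rho> i j l"
          unfolding t3_def using ik jl ij kl T dens by (intro G_3) (auto simp: tau_def)
        have "EC d T \<rho> i j k l = f1 d \<rho> i j l"
          unfolding EC_def f1_def G3 using ik jl ij kl T by (simp add: Gt)
        moreover have "N i j l = 0" using ik jl ij kl by (intro N_distinct) auto
        moreover have "W d \<rho> i j k l = Re (f1 d \<rho> i j l) + 2 * N i j l"
          unfolding W_def using ik jl ij kl by simp
        ultimately show ?thesis using ij kl by simp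
      qed
    next
      case ik: False
      show ?thesis
      proof (cases "i = l")
        case il: True
        show ?thesis
        proof (cases "j = k")
          case jk: True
          have G1: "G d T \<rho> (\<lambda>t. tau k l (tau i j t)) = 1"
            using il jk dens by (intro G_id) (auto simp: tau_def)
          have "Re (EC d T \<rho> i j k l) = 1 - Re (t2 d \<rho> i j * t2 d \<rho> j i)"
            unfolding EC_def G1 using il jk ij T by (simp add: Gt)
          also have "\<dots> \<le> 1 + cmod (t2 d \<rho> i j * t2 d \<rho> j i)"
            by (metis abs_Re_le_cmod abs_le_D2 add_le_cancel_left diff_conv_add_uminus)
          also have "\<dots> \<le> 1 + 1 * 1" unfolding norm_mult using t2b T
            by (intro add_left_mono mult_mono) auto
          finally have "Re (EC d T \<rho> i j k l) \<le> 2" by simp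
          moreover have "0 \<le> Re (f2 d \<rho> i j k) + 2 * N i j k" using b2 jk by auto
          moreover have "0 \<le> Re (f3 d \<rho> i j l) + 2 * N i j l" using b3 il by auto
          moreover have "W d \<rho> i j k l = (Re (f2 d \<rho> i j k) + 2 * N i j k) + (Re (f3 d \<rho> i j l) + 2 * N i j l) + 2"
            unfolding W_def using il jk ij ik by simp
          ultimately show ?thesis using ij kl by simp
        next
          case jk: False
          have G3: "G d T \<rho> (\<lambda>t. tau k l (tau i j t)) = t3 d \<rho> i j k"
            unfolding t3_def using il jk ij kl ik T dens by (intro G_3) (auto simp: tau_def)
          have "EC d T \<rho> i j k l = f2 d \<rho> i j k"
            unfolding EC_def f2_def G3 using il jk ij kl T by (simp add: Gt)
          moreover have "N i j k = 0" using il jk ij kl ik by (intro N_distinct) auto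
          moreover have "W d \<rho> i j k l = Re (f2 d \<rho> i j k) + 2 * N i j k"
            unfolding W_def using il jk ij ik kl by simp
          ultimately show ?thesis using ij kl by simp
        qed
      next
        case il: False
        show ?thesis
        proof (cases "j = k")
          case jk: True
          have G3: "G d T \<rho> (\<lambda>t. tau k l (tau i j t)) = t3 d \<rho> i l j"
            unfolding t3_def using il jk ij kl ik T dens by (intro G_3) (auto simp: tau_def)
          have "EC d T \<rho> i j k l = f3 d \<rho> i j l"
            unfolding EC_def f3_def G3 using il jk ij kl T by (simp add: Gt)
          moreover have "N i j l = 0" using il jk ij kl ik by (intro N_distinct) auto
          moreover have "W d \<rho> i j k l = Re (f3 d \<rho> i j l) + 2 * N i j l"
            unfolding W_def using il jk ij ik kl by simp
          ultimately show ?thesis using ij kl by simp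
        next
          case jk: False
          show ?thesis
          proof (cases "j = l")
            case jl: True
            have G3: "G d T \<rho> (\<lambda>t. tau k l (tau i j t)) = t3 d \<rho> i k j"
              unfolding t3_def using il jk ij kl ik jl T dens by (intro G_3) (auto simp: tau_def)
            have "EC d T \<rho> i j k l = f4 d \<rho> i j k"
              unfolding EC_def f4_def G3 using jl ij kl T by (simp add: Gt)
            moreover have "N i j k = 0" using il jk ij kl ik jl by (intro N_distinct) auto
            moreover have "W d \<rho> i j k l = Re (f4 d \<rho> i j k) + 2 * N i j k"
              unfolding W_def using il jk ij ik kl jl by simp
            ultimately show ?thesis using ij kl by simp
          next
            case jl: False
            have G4: "G d T \<rho> (\<lambda>t. tau k l (tau i j t)) = t2 d \<rho> i j * t2 d \<rho> k l"
              unfolding t2_def using il jk ij kl ik jl T dens by (intro G_22) (auto simp: tau_def)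
            have "EC d T \<rho> i j k l = 0"
              unfolding EC_def G4 using ij kl T by (simp add: Gt)
            moreover have "W d \<rho> i j k l = 0"
              unfolding W_def using il jk ij ik kl jl by simp
            ultimately show ?thesis using ij kl by simp
          qed
        qed
      qed
    qed
  qed
qed


lemma sum_if_out_gen: "(\<Sum>x\<in>A. if P then f x else 0) = (if P then (\<Sum>x\<in>A. f x) else (0::'a::comm_monoid_add))"
  by simp

lemma mult_if01: "(x::real) * (if P then 1 else 0) = (if P then x else 0)" by simp
lemma if_distrib_and_real: "(if P \<and> Q then (x::real) else 0) = (if P then (if Q then x else 0) else 0)" by simp

lemma sum4_split:
  fixes F :: "nat \<Rightarrow> nat \<Rightarrow> nat \<Rightarrow> real"
  shows
  "(\<Sum>i<T. \<Sum>j<T. \<Sum>k<T. \<Sum>l<T. if i = k then F i j l else 0) = (\<Sum>i<T. \<Sum>j<T. \<Sum>l<T. F i j l)"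
  "(\<Sum>i<T. \<Sum>j<T. \<Sum>k<T. \<Sum>l<T. if i = l then F i j k else 0) = (\<Sum>i<T. \<Sum>j<T. \<Sum>k<T. F i j k)"
  "(\<Sum>i<T. \<Sum>j<T. \<Sum>k<T. \<Sum>l<T. if j = k then F i j l else 0) = (\<Sum>i<T. \<Sum>j<T. \<Sum>l<T. F i j l)"
  "(\<Sum>i<T. \<Sum>j<T. \<Sum>k<T. \<Sum>l<T. if j = l then F i j k else 0) = (\<Sum>i<T. \<Sum>j<T. \<Sum>k<T. F i j k)"
  "(\<Sum>i<T. \<Sum>j<T. \<Sum>k<T. \<Sum>l<T. if i = k \<and> j = l then 2 else 0) = 2 * (real T)^2"
  "(\<Sum>i<T. \<Sum>j<T. \<Sum>k<T. \<Sum>l<T. if i = l \<and> j = k then 2 else 0) = 2 * (real T)^2"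
  by (simp_all add: sum_if_out_gen sum.delta sum.delta' power2_eq_square if_distrib_and_real)

lemma sumN: "(\<Sum>i<T. \<Sum>j<T. \<Sum>l<T. N i j l) = 3 * (real T)^2"
  unfolding N_def by (simp add: sum.distrib sum_if_out_gen sum.delta sum.delta' power2_eq_square mult_if01)


lemma Ssum_eta: "Ssum T \<rho> = (\<lambda>a b. \<Sum>t<T. \<rho> t a b)"
  unfolding Ssum_def by (intro ext) simp

lemma row_sum: "(\<Sum>j<T. t2 d \<rho> i j) = trd d (mmd d (\<rho> i) (Ssum T \<rho>))"
  unfolding t2_def Ssum_eta by (rule tr2_sum_r)

lemma col_sum: "(\<Sum>i<T. t2 d \<rho> i j) = trd d (mmd d (\<rho> j) (Ssum T \<rho>))"
proof -
  have "(\<Sum>i<T. t2 d \<rho> i j) = (\<Sum>i<T. trd d (mmd d (\<rho> j) (\<rho> i)))"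
    unfolding t2_def by (intro sum.cong refl) (rule tr2_comm)
  also have "\<dots> = trd d (mmd d (\<rho> j) (Ssum T \<rho>))"
    unfolding Ssum_eta by (rule tr2_sum_r)
  finally show ?thesis .
qed

lemma y_total: "(\<Sum>i<T. trd d (mmd d (\<rho> i) (Ssum T \<rho>))) = trd d (mmd d (Ssum T \<rho>) (Ssum T \<rho>))"
  unfolding Ssum_eta by (rule tr2_sum_l)

lemma t3_total: "(\<Sum>i<T. \<Sum>j<T. \<Sum>l<T. t3 d \<rho> i j l) = tr3f d (Ssum T \<rho>) (Ssum T \<rho>) (Ssum T \<rho>)"
  unfolding t3_def Ssum_eta tr3_sum_3 tr3_sum_2 tr3_sum_1 ..

definition Yv where "Yv d T \<rho> i = trd d (mmd d (\<rho> i) (Ssum T \<rho>))"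

definition Full where "Full d T \<rho> = tr3f d (Ssum T \<rho>) (Ssum T \<rho>) (Ssum T \<rho>) - (\<Sum>i<T. Yv d T \<rho> i * Yv d T \<rho> i)"

lemma full1: "(\<Sum>i<T. \<Sum>j<T. \<Sum>l<T. f1 d \<rho> i j l) = Full d T \<rho>"
proof -
  have "(\<Sum>i<T. \<Sum>j<T. \<Sum>l<T. t2 d \<rho> i j * t2 d \<rho> i l) = (\<Sum>i<T. Yv d T \<rho> i * Yv d T \<rho> i)"
    by (simp add: sum_product[symmetric] row_sum col_sum Yv_def)
  then show ?thesis unfolding f1_def Full_def t3_total[symmetric] by (simp add: sum_subtractf)
qed

lemma full2: "(\<Sum>i<T. \<Sum>j<T. \<Sum>k<T. f2 d \<rho> i j k) = Full d T \<rho>"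
proof -
  have "(\<Sum>i<T. \<Sum>j<T. \<Sum>k<T. t2 d \<rho> i j * t2 d \<rho> k i) = (\<Sum>i<T. Yv d T \<rho> i * Yv d T \<rho> i)"
    by (simp add: sum_product[symmetric] row_sum col_sum Yv_def)
  then show ?thesis unfolding f2_def Full_def t3_total[symmetric] by (simp add: sum_subtractf)
qed

lemma t3_total': "(\<Sum>i<T. \<Sum>j<T. \<Sum>l<T. t3 d \<rho> i l j) = tr3f d (Ssum T \<rho>) (Ssum T \<rho>) (Ssum T \<rho>)"
  unfolding t3_total[symmetric] by (rule sum.cong[OF refl], rule sum.swap)

lemma full3: "(\<Sum>i<T. \<Sum>j<T. \<Sum>l<T. f3 d \<rho> i j l) = Full d T \<rho>"
proof -
  have "(\<Sum>i<T. \<Sum>j<T. \<Sum>l<T. t2 d \<rho> i j * t2 d \<rho> j l) = (\<Sum>j<T. \<Sum>i<T. \<Sum>l<T. t2 d \<rho> i j * t2 d \<rho> j l)"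
    by (rule sum.swap)
  also have "\<dots> = (\<Sum>i<T. Yv d T \<rho> i * Yv d T \<rho> i)"
    by (simp add: sum_product[symmetric] row_sum col_sum Yv_def)
  finally show ?thesis unfolding f3_def Full_def t3_total'[symmetric] by (simp add: sum_subtractf)
qed

lemma full4: "(\<Sum>i<T. \<Sum>j<T. \<Sum>k<T. f4 d \<rho> i j k) = Full d T \<rho>"
proof -
  have "(\<Sum>i<T. \<Sum>j<T. \<Sum>k<T. t2 d \<rho> i j * t2 d \<rho> k j) = (\<Sum>j<T. \<Sum>i<T. \<Sum>k<T. t2 d \<rho> i j * t2 d \<rho> k j)"
    by (rule sum.swap)
  also have "\<dots> = (\<Sum>i<T. Yv d T \<rho> i * Yv d T \<rho> i)"
    by (simp add: sum_product[symmetric] row_sum col_sum Yv_def)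
  finally show ?thesis unfolding f4_def Full_def t3_total'[symmetric] by (simp add: sum_subtractf)
qed


lemma mu_eq:
  assumes T: "T \<ge> 1" and dens: "\<forall>t<T. density d (\<rho> t)" and d: "d \<ge> 1"
  shows "mu d T \<rho> = trd d (mmd d (rho_avg T \<rho>) (rho_avg T \<rho>)) - 1 / of_nat d"
proof -
  have R: "density d (rho_avg T \<rho>)" by (rule avg_density[OF T dens])
  have tr: "(\<Sum>a<d. rho_avg T \<rho> a a) = 1" by (rule dens_tr[OF R])
  show ?thesis unfolding mu_def Let_def tr2_shift tr using d
    by (simp add: power2_eq_square field_simps)
qed

lemma herm_tr2_nonneg:
  assumes "herm d H"
  shows "0 \<le> Re (trd d (mmd d H H))"
proof -
  have "Re (trd d (mmd d H H)) = (\<Sum>x<d. \<Sum>y<d. Re (H x y * H y x))" unfolding tr2_eq by simp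
  also have "\<dots> = (\<Sum>x<d. \<Sum>y<d. (cmod (H y x))\<^sup>2)"
  proof (intro sum.cong refl)
    fix x y assume "x \<in> {..<d}" "y \<in> {..<d}"
    then have "H x y = cnj (H y x)" using herm_cnj[OF assms] by simp
    then show "Re (H x y * H y x) = (cmod (H y x))\<^sup>2"
      by (simp add: cmod_def power2_eq_square)
  qed
  also have "\<dots> \<ge> 0" by (intro sum_nonneg) auto
  finally show ?thesis .
qed

lemma mu_nonneg:
  assumes T: "T \<ge> 1" and dens: "\<forall>t<T. density d (\<rho> t)" and d: "d \<ge> 1"
  shows "0 \<le> Re (mu d T \<rho>)"
proof -
  define R where "R = rho_avg T \<rho>"
  have Rd: "density d R" unfolding R_def by (rule avg_density[OF T dens])
  define H where "H = (\<lambda>a b. R a b - (if a = b then 1 / of_nat d else 0))"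
  have "herm d H" unfolding herm_def
  proof (intro allI impI)
    fix a b assume "a < d" "b < d"
    then have "R b a = cnj (R a b)" by (intro dens_herm[OF Rd])
    then show "H b a = cnj (H a b)" unfolding H_def by auto
  qed
  then have "0 \<le> Re (trd d (mmd d H H))" by (rule herm_tr2_nonneg)
  then show ?thesis unfolding mu_def Let_def H_def R_def .
qed

lemma full_bound:
  assumes T: "T \<ge> 1" and dens: "\<forall>t<T. density d (\<rho> t)" and d: "d \<ge> 1"
  shows "Re (Full d T \<rho>) \<le> (real T)^3 * Re (mu d T \<rho>)"
proof -
  define R where "R = rho_avg T \<rho>"
  have Rd: "density d R" unfolding R_def by (rule avg_density[OF T dens])
  define p2 where "p2 = trd d (mmd d R R)"
  define p3 where "p3 = tr3f d R R R"
  have S: "Ssum T \<rho> = (\<lambda>a b. of_nat T * R a b)" unfolding R_def by (rule Ssum_avg[OF T])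
  have hS: "herm d (Ssum T \<rho>)" unfolding S herm_def
  proof (intro allI impI)
    fix a b assume "a < d" "b < d"
    then have "R b a = cnj (R a b)" by (intro dens_herm[OF Rd])
    then show "of_nat T * R b a = cnj (of_nat T * R a b)" by simp
  qed
  have Sp3: "tr3f d (Ssum T \<rho>) (Ssum T \<rho>) (Ssum T \<rho>) = (of_nat T)^3 * p3"
    unfolding S p3_def by (rule tr3_scale)
  have Sp2: "trd d (mmd d (Ssum T \<rho>) (Ssum T \<rho>)) = (of_nat T)^2 * p2"
    unfolding S p2_def by (rule tr2_scale)
  have yIm: "Im (Yv d T \<rho> i) = 0" if "i < T" for i
    unfolding Yv_def using that dens by (intro tr2_real hS dens_herm') auto
  have ysum: "(\<Sum>i<T. Yv d T \<rho> i) = (of_nat T)^2 * p2"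
    unfolding Yv_def y_total Sp2 ..
  have p2Im: "Im p2 = 0" unfolding p2_def using Rd by (intro tr2_real dens_herm')
  define Y where "Y = Re (\<Sum>i<T. Yv d T \<rho> i * Yv d T \<rho> i)"
  have c1: "(\<Sum>i<T. Re (Yv d T \<rho> i))^2 \<le> (\<Sum>i<T. (Re (Yv d T \<rho> i))^2) * (\<Sum>i<T. 1^2)"
    using cs_sum[of "\<lambda>i. Re (Yv d T \<rho> i)" "\<lambda>_. 1" "{..<T}"] by simp
  have e0: "(\<Sum>i<T. (1::real)^2) = real T" by simp
  have e1: "(\<Sum>i<T. Re (Yv d T \<rho> i)) = (real T)^2 * Re p2"
  proof -
    have "(\<Sum>i<T. Re (Yv d T \<rho> i)) = Re (\<Sum>i<T. Yv d T \<rho> i)" by (simp add: Re_sum)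
    also have "\<dots> = Re ((of_nat T)^2 * p2)" unfolding ysum ..
    also have "\<dots> = (real T)^2 * Re p2" using p2Im by simp
    finally show ?thesis .
  qed
  have e2: "Y = (\<Sum>i<T. (Re (Yv d T \<rho> i))^2)"
    unfolding Y_def Re_sum using yIm by (intro sum.cong refl) (simp add: power2_eq_square)
  have c2: "((real T)^2 * Re p2)^2 \<le> Y * real T"
    using c1 unfolding e0 e1 e2[symmetric] .
  have "real T * ((real T)^3 * (Re p2)^2) = ((real T)^2 * Re p2)^2"
    by (simp add: power2_eq_square power3_eq_cube)
  with c2 have "real T * ((real T)^3 * (Re p2)^2) \<le> real T * Y" by (simp add: mult.commute)
  then have c3: "(real T)^3 * (Re p2)^2 \<le> Y" using T by simp
  have c4: "Re (tr3f d (Ssum T \<rho>) (Ssum T \<rho>) (Ssum T \<rho>)) = (real T)^3 * Re p3"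
    unfolding Sp3 by simp
  have c5: "Re p3 - (Re p2)^2 \<le> Re p2 - 1 / real d"
    unfolding p2_def p3_def using key_ineq[OF Rd d] .
  have c6: "Re (mu d T \<rho>) = Re p2 - 1 / real d"
    unfolding mu_eq[OF T dens d] p2_def R_def by simp
  have "Re (Full d T \<rho>) = (real T)^3 * Re p3 - Y"
    unfolding Full_def Y_def using c4 by simp
  also have "\<dots> \<le> (real T)^3 * Re p3 - (real T)^3 * (Re p2)^2" using c3 by simp
  also have "\<dots> = (real T)^3 * (Re p3 - (Re p2)^2)" by (simp add: algebra_simps)
  also have "\<dots> \<le> (real T)^3 * (Re p2 - 1 / real d)"
    using c5 by (intro mult_left_mono) auto
  also have "\<dots> = (real T)^3 * Re (mu d T \<rho>)" unfolding c6 ..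
  finally show ?thesis .
qed


lemma reF1: "(\<Sum>i<T. \<Sum>j<T. \<Sum>l<T. Re (f1 d \<rho> i j l)) = Re (Full d T \<rho>)"
  unfolding full1[symmetric] by (simp add: Re_sum)

lemma reF2: "(\<Sum>i<T. \<Sum>j<T. \<Sum>l<T. Re (f2 d \<rho> i j l)) = Re (Full d T \<rho>)"
  unfolding full2[symmetric] by (simp add: Re_sum)

lemma reF3: "(\<Sum>i<T. \<Sum>j<T. \<Sum>l<T. Re (f3 d \<rho> i j l)) = Re (Full d T \<rho>)"
  unfolding full3[symmetric] by (simp add: Re_sum)

lemma reF4: "(\<Sum>i<T. \<Sum>j<T. \<Sum>l<T. Re (f4 d \<rho> i j l)) = Re (Full d T \<rho>)"
  unfolding full4[symmetric] by (simp add: Re_sum)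

lemmas reF = reF1 reF2 reF3 reF4

lemma sum3_br: "(\<Sum>i<T. \<Sum>j<T. \<Sum>l<T. (F i j l :: real) + 2 * N i j l)
   = (\<Sum>i<T. \<Sum>j<T. \<Sum>l<T. F i j l) + 6 * (real T)^2"
  using sumN[of T] by (simp add: sum.distrib sum_distrib_left[symmetric])

lemma sumW:
  "(\<Sum>i<T. \<Sum>j<T. \<Sum>k<T. \<Sum>l<T. W d \<rho> i j k l) = 4 * Re (Full d T \<rho>) + 28 * (real T)^2"
proof -
  have "(\<Sum>i<T. \<Sum>j<T. \<Sum>k<T. \<Sum>l<T. W d \<rho> i j k l) =
     (\<Sum>i<T. \<Sum>j<T. \<Sum>l<T. Re (f1 d \<rho> i j l) + 2 * N i j l)
   + (\<Sum>i<T. \<Sum>j<T. \<Sum>k<T. Re (f2 d \<rho> i j k) + 2 * N i j k)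
   + (\<Sum>i<T. \<Sum>j<T. \<Sum>l<T. Re (f3 d \<rho> i j l) + 2 * N i j l)
   + (\<Sum>i<T. \<Sum>j<T. \<Sum>k<T. Re (f4 d \<rho> i j k) + 2 * N i j k)
   + 2 * (real T)^2 + 2 * (real T)^2"
    unfolding W_def sum.distrib sum4_split ..
  also have "\<dots> = 4 * Re (Full d T \<rho>) + 28 * (real T)^2"
    unfolding sum3_br reF by simp
  finally show ?thesis .
qed

lemma EU_formula:
  assumes T: "T \<ge> 1" and dens: "\<forall>t<T. density d (\<rho> t)"
  shows "expect (basis d T) (prod_state T \<rho>) (Uop T)
       = (\<Sum>i<T. \<Sum>j<T. t2 d \<rho> i j) - (\<Sum>i<T. t2 d \<rho> i i)"
proof -
  have "expect (basis d T) (prod_state T \<rho>) (Uop T) = (\<Sum>i<T. \<Sum>j<T. if i \<noteq> j then t2 d \<rho> i j else 0)"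
    unfolding E_U[OF T] Pairs_sum using dens by (intro sum.cong refl) (simp add: G_tau)
  also have "\<dots> = (\<Sum>i<T. (\<Sum>j<T. t2 d \<rho> i j) - t2 d \<rho> i i)"
  proof (rule sum.cong[OF refl])
    fix i assume i: "i \<in> {..<T}"
    have "(\<Sum>j<T. t2 d \<rho> i j) = (\<Sum>j<T. (if i \<noteq> j then t2 d \<rho> i j else 0) + (if i = j then t2 d \<rho> i j else 0))"
      by (intro sum.cong refl) auto
    also have "\<dots> = (\<Sum>j<T. if i \<noteq> j then t2 d \<rho> i j else 0) + t2 d \<rho> i i"
      using i by (simp add: sum.distrib)
    finally show "(\<Sum>j<T. if i \<noteq> j then t2 d \<rho> i j else 0) = (\<Sum>j<T. t2 d \<rho> i j) - t2 d \<rho> i i"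
      by simp
  qed
  also have "\<dots> = (\<Sum>i<T. \<Sum>j<T. t2 d \<rho> i j) - (\<Sum>i<T. t2 d \<rho> i i)"
    by (simp add: sum_subtractf)
  finally show ?thesis .
qed

lemma t2_total:
  assumes T: "T \<ge> 1"
  shows "(\<Sum>i<T. \<Sum>j<T. t2 d \<rho> i j) = (of_nat T)^2 * trd d (mmd d (rho_avg T \<rho>) (rho_avg T \<rho>))"
proof -
  have "(\<Sum>i<T. \<Sum>j<T. t2 d \<rho> i j) = trd d (mmd d (Ssum T \<rho>) (Ssum T \<rho>))"
    unfolding row_sum y_total ..
  also have "\<dots> = (of_nat T)^2 * trd d (mmd d (rho_avg T \<rho>) (rho_avg T \<rho>))"
    unfolding Ssum_avg[OF T] by (rule tr2_scale)
  finally show ?thesis .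
qed


lemma exp_part:
  assumes d: "d \<ge> 1" and T: "T \<ge> 1" and dens: "\<forall>t<T. density d (\<rho> t)"
  shows "cmod (expect (basis d T) (prod_state T \<rho>) (A_op d T) - mu d T \<rho>) \<le> 1 / real T"
proof -
  define p2 where "p2 = trd d (mmd d (rho_avg T \<rho>) (rho_avg T \<rho>))"
  have Tpos: "(of_nat T :: complex) \<noteq> 0" using T by simp
  have EA: "expect (basis d T) (prod_state T \<rho>) (A_op d T)
      = expect (basis d T) (prod_state T \<rho>) (Uop T) / (of_nat T)^2 - 1 / of_nat d"
    unfolding A_op_U expect_lin E_id[OF dens] by simp
  have "expect (basis d T) (prod_state T \<rho>) (A_op d T) - mu d T \<rho>
      = - (\<Sum>i<T. t2 d \<rho> i i) / (of_nat T)^2"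
    unfolding EA EU_formula[OF T dens] t2_total[OF T] mu_eq[OF T dens d] p2_def[symmetric]
    using Tpos by (simp add: field_simps)
  then have "cmod (expect (basis d T) (prod_state T \<rho>) (A_op d T) - mu d T \<rho>)
      = cmod (\<Sum>i<T. t2 d \<rho> i i) / (real T)^2"
    by (simp add: norm_divide norm_power)
  also have "\<dots> \<le> (\<Sum>i<T. (1::real)) / (real T)^2"
    by (intro divide_right_mono order.trans[OF norm_sum sum_mono] t2_bound[OF dens]) auto
  also have "\<dots> = 1 / real T" by (simp add: power2_eq_square)
  finally show ?thesis .
qed

lemma var_part:
  assumes d: "d \<ge> 1" and T: "T \<ge> 1" and dens: "\<forall>t<T. density d (\<rho> t)"
  shows "Re (variance (basis d T) (prod_state T \<rho>) (A_op d T))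
     \<le> 28 * (Re (mu d T \<rho>) / real T + 1 / (real T)^2)"
proof -
  define B where "B = basis d T"
  define P where "P = prod_state T \<rho>"
  define g where "g = (\<lambda>p. G d T \<rho> (tau (fst p) (snd p)))"
  have EU: "expect B P (Uop T) = (\<Sum>p\<in>Pairs T. g p)" unfolding B_def P_def g_def by (rule E_U[OF T])
  have EUU: "expect B P (mat_mult B (Uop T) (Uop T))
     = (\<Sum>p\<in>Pairs T. \<Sum>q\<in>Pairs T. G d T \<rho> (\<lambda>t. tau (fst q) (snd q) (tau (fst p) (snd p) t)))"
    unfolding B_def P_def by (rule E_UU)
  have D: "expect B P (mat_mult B (Uop T) (Uop T)) - (expect B P (Uop T))^2
     = (\<Sum>p\<in>Pairs T. \<Sum>q\<in>Pairs T. EC d T \<rho> (fst p) (snd p) (fst q) (snd q))"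
    unfolding EUU EU EC_def g_def power2_eq_square sum_product
    by (simp add: sum_subtractf)
  also have "\<dots> = (\<Sum>i<T. \<Sum>j<T. \<Sum>k<T. \<Sum>l<T.
       if i \<noteq> j then (if k \<noteq> l then EC d T \<rho> i j k l else 0) else 0)"
    unfolding Pairs_sum fst_conv snd_conv by (simp only: sum_if_out_gen)
  finally have D': "Re (expect B P (mat_mult B (Uop T) (Uop T)) - (expect B P (Uop T))^2)
     = (\<Sum>i<T. \<Sum>j<T. \<Sum>k<T. \<Sum>l<T.
       Re (if i \<noteq> j then (if k \<noteq> l then EC d T \<rho> i j k l else 0) else 0))"
    by (simp only: Re_sum)
  also have "\<dots> \<le> (\<Sum>i<T. \<Sum>j<T. \<Sum>k<T. \<Sum>l<T. W d \<rho> i j k l)"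
    by (intro sum_mono W_bound[OF _ _ _ _ dens]) auto
  also have "\<dots> = 4 * Re (Full d T \<rho>) + 28 * (real T)^2" by (rule sumW)
  also have "\<dots> \<le> 4 * ((real T)^3 * Re (mu d T \<rho>)) + 28 * (real T)^2"
    using full_bound[OF T dens d] by simp
  finally have num: "Re (expect B P (mat_mult B (Uop T) (Uop T)) - (expect B P (Uop T))^2)
      \<le> 4 * ((real T)^3 * Re (mu d T \<rho>)) + 28 * (real T)^2" .
  have "Re (variance B P (A_op d T))
      = Re (expect B P (mat_mult B (Uop T) (Uop T)) - (expect B P (Uop T))^2) / (real T)^4"
    unfolding B_def P_def var_formula[OF T d dens]
    by (simp add: Re_divide_of_nat)
  also have "\<dots> \<le> (4 * ((real T)^3 * Re (mu d T \<rho>)) + 28 * (real T)^2) / (real T)^4"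
    using num by (intro divide_right_mono) auto
  also have "\<dots> = 4 * (Re (mu d T \<rho>) / real T) + 28 * (1 / (real T)^2)"
    using T by (simp add: field_simps power2_eq_square power3_eq_cube power4_eq_xxxx)
  also have "\<dots> \<le> 28 * (Re (mu d T \<rho>) / real T) + 28 * (1 / (real T)^2)"
  proof -
    have "0 \<le> Re (mu d T \<rho>) / real T" using mu_nonneg[OF T dens d] by simp
    then show ?thesis by linarith
  qed
  finally show ?thesis unfolding B_def P_def by (simp add: algebra_simps)
qed

theorem lemma7p2:
  "\<exists>K::real. K > 0 \<and>
     (\<forall>(d::nat) (T::nat) (\<rho>::nat \<Rightarrow> nat \<Rightarrow> nat \<Rightarrow> complex).
        d \<ge> 1 \<longrightarrow> T \<ge> 1 \<longrightarrow> (\<forall>t<T. density d (\<rho> t)) \<longrightarrow>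
        cmod (expect (basis d T) (prod_state T \<rho>) (A_op d T) - mu d T \<rho>) \<le> 1 / real T \<and>
        Re (variance (basis d T) (prod_state T \<rho>) (A_op d T))
          \<le> K * (Re (mu d T \<rho>) / real T + 1 / (real T)^2))"
proof (rule exI[of _ 28], intro conjI allI impI)
  show "(0::real) < 28" by simp
next
  fix d T :: nat and \<rho> :: "nat \<Rightarrow> nat \<Rightarrow> nat \<Rightarrow> complex"
  assume h: "d \<ge> 1" "T \<ge> 1" "\<forall>t<T. density d (\<rho> t)"
  show "cmod (expect (basis d T) (prod_state T \<rho>) (A_op d T) - mu d T \<rho>) \<le> 1 / real T"
    by (rule exp_part[OF h])
  show "Re (variance (basis d T) (prod_state T \<rho>) (A_op d T))
          \<le> 28 * (Re (mu d T \<rho>) / real T + 1 / (real T)^2)"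
    by (rule var_part[OF h])
qed


end
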